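(* Let $H$ be a $k$-uniform hypergraph and $d$ a positive integer. The toric ideal $I_H$ is generated in degree at most $d$ if and only if for every primitive monomial walk $\mathcal W$ of length $2n>2d$ with $\operatorname{supp}(\mathcal W)\subseteq E(H)$, one of the following two conditions holds: (i) there exists a proper splitting set $S$ of $\mathcal W$; or (ii) there is a finite sequence of pairs $(S_1,R_1),\dots,(S_N,R_N)$ of multisets of edges such that - $S_1$ and $R_1$ are, respectively, a blue splitting set and a red splitting set of $\mathcal W$, each of size less than $n$, with decompositions $(\Gamma_{1,1},S_1,\Gamma_{2,1})$ and $(\Upsilon_{1,1},R_1,\Upsilon_{2,1})$ respectively; - for each $1\le i<N$, $S_{i+1}$ and $R_{i+1}$ are, respectively, a blue splitting set and a red splitting set of $\mathcal W_i$, each of size less than $n$, with decompositions $(\Gamma_{1,i+1},S_{i+1},\Gamma_{2,i+1})$ and $(\Upsilon_{1,i+1},R_{i+1},\Upsilon_{2,i+1})$ respectively, where for each $i$, $\mathcal W_i$ denotes the bicolored multiset whose blue part is $(\Gamma_{2,i})_{blue}$ and whose red part is $(\Upsilon_{1,i})_{red}$; - $S_N\cap R_N\neq\emptyset$, or there exists a proper splitting set of $\mathcal W_N$.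
   Context: A hypergraph $H$ has vertex set $V=\{1,\dots,m\}$ and a set $E(H)$ of edges, each a nonempty subset of $V$ (no repeated edges); it is $k$-uniform if every edge has exactly $k$ elements. For a field $K$, the toric ideal $I_H$ is the kernel of $\phi_H: K[t_e : e\in E(H)]\to K[x_1,\dots,x_m]$, $t_e\mapsto\prod_{j\in e}x_j$; "generated in degree at most $d$" means $I_H$ is generated by its elements of degree at most $d$. Multisets of edges: $|M|$ is the size counted with multiplicity (the "size" of $M$); $\operatorname{supp}(M)$ is the set of distinct elements; $M_1\sqcup M_2$ adds multiplicities; $M_1\cap M_2$ takes minimum multiplicities; $M_2\subseteq M_1$ is multiplicity-wise containment, and $M_2$ is a proper submultiset of $M_1$ if moreover $M_2\neq M_1$. A balanced edge set $\mathcal E$ is a pair of finite multisets $\mathcal E_{blue},\mathcal E_{red}$ of edges of $H$ such that every vertex lies in the same number of blue as red edges, counted with multiplicity; $\operatorname{supp}(\mathcal E)=\operatorname{supp}(\mathcal E_{blue}\sqcup\mathcal E_{red})$, and its length/size is $|\mathcal E|=|\mathcal E_{blue}|+|\mathcal E_{red}|$. For uniform $H$, balanced edge sets are called monomial walks. A balanced edge set $\mathcal E$ is primitive if there is no other balanced edge set $\mathcal E'$ with $\mathcal E'_{blue}\subsetneq\mathcal E_{blue}$ and $\mathcal E'_{red}\subsetneq\mathcal E_{red}$. A balanced edge set $\mathcal F$ is reducible with separator $S$ and decomposition $(\Gamma_1,S,\Gamma_2)$ if $S$ is a nonempty multiset with $\operatorname{supp}(S)\subseteq\operatorname{supp}(\mathcal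 F)$ and there are balanced edge sets $\Gamma_1\neq\mathcal F$, $\Gamma_2\neq\mathcal F$ with $S=\Gamma_{1,red}\cap\Gamma_{2,blue}$, $\mathcal F_{blue}\sqcup\mathcal F_{red}=\Gamma_{1,blue}\sqcup\Gamma_{1,red}\sqcup\Gamma_{2,blue}\sqcup\Gamma_{2,red}$, $\Gamma_{1,red},\Gamma_{2,red}\subseteq\mathcal F_{red}$ and $\Gamma_{1,blue},\Gamma_{2,blue}\subseteq\mathcal F_{blue}$. $S$ is proper with respect to $(\Gamma_1,S,\Gamma_2)$ if $S$ is a proper submultiset of both $\Gamma_{1,red}$ and $\Gamma_{2,blue}$; if not proper, $S$ is blue with respect to $(\Gamma_1,S,\Gamma_2)$ if $\Gamma_{1,red}=S$ and red if $\Gamma_{2,blue}=S$. For a bicolored multiset $\mathcal E$ and a multiset $S$ of edges, $\mathcal E+S$ has blue part $\mathcal E_{blue}\sqcup S$ and red part $\mathcal E_{red}\sqcup S$. A nonempty multiset $S$ with $\operatorname{supp}(S)\subseteq E(H)$ is a splitting set of $\mathcal E$ with decomposition $(\Gamma_1,S,\Gamma_2)$ if $\mathcal E+S$ is reducible with separator $S$ and decomposition $(\Gamma_1,S,\Gamma_2)$; it is a blue (resp. red) splitting set with respect to this decomposition if $S$ is a blue (resp. red) separator of $\mathcal E+S$ with respect to it; it is a proper splitting set of $\mathcal E$ if there is a decomposition of $\mathcal E+S$ with respect to which $S$ is proper. *)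

theory Defs
  imports "HOL-Library.Multiset" "HOL-Library.Poly_Mapping"
begin

definition hypergraph :: "nat \<Rightarrow> nat set set \<Rightarrow> bool" where
  "hypergraph m E \<longleftrightarrow> (\<forall>e\<in>E. e \<noteq> {} \<and> e \<subseteq> {1..m})"

definition uniform :: "nat \<Rightarrow> nat set set \<Rightarrow> bool" where
  "uniform k E \<longleftrightarrow> (\<forall>e\<in>E. card e = k)"

text \<open>Polynomials over a field 'k in the variables t_e (e an edge) are
represented as finitely supported maps from monomials (finitely supported
exponent maps edge => nat) to coefficients; polynomials in x_1..x_m likewise
with variables indexed by nat.\<close>

type_synonym 'k tpoly = "(nat set \<Rightarrow>\<^sub>0 nat) \<Rightarrow>\<^sub>0 'k"
type_synonym 'k xpoly = "(nat \<Rightarrow>\<^sub>0 nat) \<Rightarrow>\<^sub>0 'k"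

definition tpoly_ring :: "nat set set \<Rightarrow> ('k::field) tpoly set" where
  "tpoly_ring E = {p. \<forall>mo\<in>Poly_Mapping.keys p. Poly_Mapping.keys mo \<subseteq> E}"

definition edge_mon_image :: "(nat set \<Rightarrow>\<^sub>0 nat) \<Rightarrow> (nat \<Rightarrow>\<^sub>0 nat)" where
  "edge_mon_image mo = (\<Sum>e\<in>Poly_Mapping.keys mo. \<Sum>j\<in>e. Poly_Mapping.single j (Poly_Mapping.lookup mo e))"

text \<open>The K-algebra map phi_H : t_e |-> prod_(j in e) x_j.\<close>
definition toric_map :: "('k::field) tpoly \<Rightarrow> 'k xpoly" where
  "toric_map p = (\<Sum>mo\<in>Poly_Mapping.keys p. Poly_Mapping.single (edge_mon_image mo) (Poly_Mapping.lookup p mo))"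

definition toric_ideal :: "nat set set \<Rightarrow> ('k::field) tpoly set" where
  "toric_ideal E = {p \<in> tpoly_ring E. toric_map p = 0}"

definition mon_deg :: "('a \<Rightarrow>\<^sub>0 nat) \<Rightarrow> nat" where
  "mon_deg mo = (\<Sum>v\<in>Poly_Mapping.keys mo. Poly_Mapping.lookup mo v)"

definition tdeg :: "('k::field) tpoly \<Rightarrow> nat" where
  "tdeg p = (if Poly_Mapping.keys p = {} then 0 else Max (mon_deg ` Poly_Mapping.keys p))"

definition ideal_gen_in :: "('k::field) tpoly set \<Rightarrow> 'k tpoly set \<Rightarrow> 'k tpoly set" where
  "ideal_gen_in R G = {p. \<exists>F c. finite F \<and> F \<subseteq> G \<and> (\<forall>g\<in>F. c g \<in> R) \<and> p = (\<Sum>g\<in>F. c g * g)}"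

definition generated_in_degree_at_most :: "nat set set \<Rightarrow> nat \<Rightarrow> ('k::field) itself \<Rightarrow> bool" where
  "generated_in_degree_at_most E d (_ :: 'k itself) \<longleftrightarrow>
     (toric_ideal E :: 'k tpoly set) =
       ideal_gen_in (tpoly_ring E) {p \<in> toric_ideal E. tdeg p \<le> d}"

type_synonym bicol = "nat set multiset \<times> nat set multiset"

abbreviation blue :: "bicol \<Rightarrow> nat set multiset" where "blue \<equiv> fst"
abbreviation red :: "bicol \<Rightarrow> nat set multiset" where "red \<equiv> snd"

definition vdeg :: "nat set multiset \<Rightarrow> nat \<Rightarrow> nat" where
  "vdeg M v = size (filter_mset (\<lambda>e. v \<in> e) M)"

definition bsupp :: "bicol \<Rightarrow> nat set set" where
  "bsupp \<E> = set_mset (blue \<E> + red \<E>)"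

definition bsize :: "bicol \<Rightarrow> nat" where
  "bsize \<E> = size (blue \<E>) + size (red \<E>)"

definition balanced :: "nat set set \<Rightarrow> bicol \<Rightarrow> bool" where
  "balanced E \<E> \<longleftrightarrow> bsupp \<E> \<subseteq> E \<and> (\<forall>v. vdeg (blue \<E>) v = vdeg (red \<E>) v)"

definition primitive :: "nat set set \<Rightarrow> bicol \<Rightarrow> bool" where
  "primitive E \<E> \<longleftrightarrow> balanced E \<E> \<and>
     \<not> (\<exists>\<E>'. balanced E \<E>' \<and> \<E>' \<noteq> ({#}, {#}) \<and> \<E>' \<noteq> \<E> \<and>
            blue \<E>' \<subset># blue \<E> \<and> red \<E>' \<subset># red \<E>)"

definition reducible_with :: "nat set set \<Rightarrow> bicol \<Rightarrow> bicol \<Rightarrow> nat set multiset \<Rightarrow> bicol \<Rightarrow> bool" where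
  "reducible_with E \<F> \<Gamma>1 S \<Gamma>2 \<longleftrightarrow>
     balanced E \<F> \<and> S \<noteq> {#} \<and> set_mset S \<subseteq> bsupp \<F> \<and>
     balanced E \<Gamma>1 \<and> balanced E \<Gamma>2 \<and> \<Gamma>1 \<noteq> \<F> \<and> \<Gamma>2 \<noteq> \<F> \<and>
     S = red \<Gamma>1 \<inter># blue \<Gamma>2 \<and>
     blue \<F> + red \<F> = blue \<Gamma>1 + red \<Gamma>1 + blue \<Gamma>2 + red \<Gamma>2 \<and>
     red \<Gamma>1 \<subseteq># red \<F> \<and> red \<Gamma>2 \<subseteq># red \<F> \<and>
     blue \<Gamma>1 \<subseteq># blue \<F> \<and> blue \<Gamma>2 \<subseteq># blue \<F>"

definition proper_sep :: "bicol \<Rightarrow> nat set multiset \<Rightarrow> bicol \<Rightarrow> bool" where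
  "proper_sep \<Gamma>1 S \<Gamma>2 \<longleftrightarrow> S \<subset># red \<Gamma>1 \<and> S \<subset># blue \<Gamma>2"

definition blue_sep :: "bicol \<Rightarrow> nat set multiset \<Rightarrow> bicol \<Rightarrow> bool" where
  "blue_sep \<Gamma>1 S \<Gamma>2 \<longleftrightarrow> \<not> proper_sep \<Gamma>1 S \<Gamma>2 \<and> red \<Gamma>1 = S"

definition red_sep :: "bicol \<Rightarrow> nat set multiset \<Rightarrow> bicol \<Rightarrow> bool" where
  "red_sep \<Gamma>1 S \<Gamma>2 \<longleftrightarrow> \<not> proper_sep \<Gamma>1 S \<Gamma>2 \<and> blue \<Gamma>2 = S"

definition add_both :: "bicol \<Rightarrow> nat set multiset \<Rightarrow> bicol" where
  "add_both \<E> S = (blue \<E> + S, red \<E> + S)"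

definition splitting_set_with :: "nat set set \<Rightarrow> bicol \<Rightarrow> bicol \<Rightarrow> nat set multiset \<Rightarrow> bicol \<Rightarrow> bool" where
  "splitting_set_with E \<E> \<Gamma>1 S \<Gamma>2 \<longleftrightarrow>
     S \<noteq> {#} \<and> set_mset S \<subseteq> E \<and> reducible_with E (add_both \<E> S) \<Gamma>1 S \<Gamma>2"

definition blue_splitting_set_with :: "nat set set \<Rightarrow> bicol \<Rightarrow> bicol \<Rightarrow> nat set multiset \<Rightarrow> bicol \<Rightarrow> bool" where
  "blue_splitting_set_with E \<E> \<Gamma>1 S \<Gamma>2 \<longleftrightarrow> splitting_set_with E \<E> \<Gamma>1 S \<Gamma>2 \<and> blue_sep \<Gamma>1 S \<Gamma>2"

definition red_splitting_set_with :: "nat set set \<Rightarrow> bicol \<Rightarrow> bicol \<Rightarrow> nat set multiset \<Rightarrow> bicol \<Rightarrow> bool" where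
  "red_splitting_set_with E \<E> \<Gamma>1 S \<Gamma>2 \<longleftrightarrow> splitting_set_with E \<E> \<Gamma>1 S \<Gamma>2 \<and> red_sep \<Gamma>1 S \<Gamma>2"

definition proper_splitting_set :: "nat set set \<Rightarrow> bicol \<Rightarrow> nat set multiset \<Rightarrow> bool" where
  "proper_splitting_set E \<E> S \<longleftrightarrow>
     (\<exists>\<Gamma>1 \<Gamma>2. splitting_set_with E \<E> \<Gamma>1 S \<Gamma>2 \<and> proper_sep \<Gamma>1 S \<Gamma>2)"

text \<open>Condition (ii): a chain of N >= 1 pairs (S_i, R_i) with decompositions
(G1 i, S i, G2 i) and (U1 i, R i, U2 i), i = 1..N.  The walk W_0 is W and
W_i = ((G2 i)_blue, (U1 i)_red).\<close>
definition chain_walk :: "bicol \<Rightarrow> (nat \<Rightarrow> bicol) \<Rightarrow> (nat \<Rightarrow> bicol) \<Rightarrow> nat \<Rightarrow> bicol" where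
  "chain_walk W G2 U1 i = (if i = 0 then W else (blue (G2 i), red (U1 i)))"

definition splitting_chain :: "nat set set \<Rightarrow> bicol \<Rightarrow> nat \<Rightarrow> bool" where
  "splitting_chain E W n \<longleftrightarrow>
    (\<exists>N::nat. \<exists>S R :: nat \<Rightarrow> nat set multiset. \<exists>G1 G2 U1 U2 :: nat \<Rightarrow> bicol.
       N \<ge> 1 \<and>
       (\<forall>i\<in>{1..N}.
          blue_splitting_set_with E (chain_walk W G2 U1 (i - 1)) (G1 i) (S i) (G2 i) \<and>
          red_splitting_set_with E (chain_walk W G2 U1 (i - 1)) (U1 i) (R i) (U2 i) \<and>
          size (S i) < n \<and> size (R i) < n) \<and>
       (S N \<inter># R N \<noteq> {#} \<or> (\<exists>T. proper_splitting_set E (chain_walk W G2 U1 N) T)))"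

end

theory Submission
  imports Defs
begin


lemma sum_keys_superset:
  assumes "finite A" "Poly_Mapping.keys p \<subseteq> A" "\<And>k. f k 0 = 0"
  shows "(\<Sum>k\<in>Poly_Mapping.keys p. f k (Poly_Mapping.lookup p k)) = (\<Sum>k\<in>A. f k (Poly_Mapping.lookup p k))"
  by (rule sum.mono_neutral_left) (use assms in \<open>auto simp: in_keys_iff\<close>)

definition pf :: "('a \<Rightarrow> 'b) \<Rightarrow> ('a \<Rightarrow>\<^sub>0 'c::comm_monoid_add) \<Rightarrow> ('b \<Rightarrow>\<^sub>0 'c)" where
  "pf h p = (\<Sum>k\<in>Poly_Mapping.keys p. Poly_Mapping.single (h k) (Poly_Mapping.lookup p k))"

lemma pf_add: "pf h (p + q) = pf h p + pf h q"
  unfolding pf_def by (rule setsum_keys_plus_distrib) (auto simp: single_add)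

lemma pf_zero[simp]: "pf h 0 = 0"
  by (simp add: pf_def)

lemma pf_single[simp]: "pf h (Poly_Mapping.single k v) = Poly_Mapping.single (h k) v"
  by (simp add: pf_def)

lemma pf_diff: "pf h (p - q) = pf h p - pf h (q::'a \<Rightarrow>\<^sub>0 'c::ab_group_add)"
  using pf_add[of h "p - q" q] by (simp add: algebra_simps)

lemma pf_sum: "pf h (\<Sum>i\<in>I. g i) = (\<Sum>i\<in>I. pf h (g i))"
  by (induction I rule: infinite_finite_induct) (auto simp: pf_add)

lemma lookup_pf: "Poly_Mapping.lookup (pf h p) x = (\<Sum>k\<in>{k\<in>Poly_Mapping.keys p. h k = x}. Poly_Mapping.lookup p k)"
proof -
  have "Poly_Mapping.lookup (pf h p) x = (\<Sum>k\<in>Poly_Mapping.keys p. (if h k = x then Poly_Mapping.lookup p k else 0))"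
    by (simp add: pf_def lookup_sum lookup_single when_def)
  also have "\<dots> = (\<Sum>k\<in>{k\<in>Poly_Mapping.keys p. h k = x}. Poly_Mapping.lookup p k)"
    by (simp add: sum.inter_filter)
  finally show ?thesis .
qed

lemma pm_expand: "p = (\<Sum>k\<in>Poly_Mapping.keys p. Poly_Mapping.single k (Poly_Mapping.lookup p k))"
proof (rule poly_mapping_eqI)
  fix x
  show "Poly_Mapping.lookup p x = Poly_Mapping.lookup (\<Sum>k\<in>Poly_Mapping.keys p. Poly_Mapping.single k (Poly_Mapping.lookup p k)) x"
    by (simp add: lookup_sum lookup_single when_def sum.delta in_keys_iff)
qed

lemma pm_mult_expand:
  fixes p q :: "('a::monoid_add) \<Rightarrow>\<^sub>0 ('b::comm_semiring_1)"
  shows "p * q = (\<Sum>a\<in>Poly_Mapping.keys p. \<Sum>b\<in>Poly_Mapping.keys q.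
      Poly_Mapping.single (a + b) (Poly_Mapping.lookup p a * Poly_Mapping.lookup q b))"
proof -
  have "p * q = (\<Sum>a\<in>Poly_Mapping.keys p. Poly_Mapping.single a (Poly_Mapping.lookup p a)) *
     (\<Sum>b\<in>Poly_Mapping.keys q. Poly_Mapping.single b (Poly_Mapping.lookup q b))"
    using pm_expand[of p] pm_expand[of q] by simp
  also have "\<dots> = (\<Sum>a\<in>Poly_Mapping.keys p. \<Sum>b\<in>Poly_Mapping.keys q.
      Poly_Mapping.single (a + b) (Poly_Mapping.lookup p a * Poly_Mapping.lookup q b))"
    by (simp add: sum_product mult_single)
  finally show ?thesis .
qed

lemma pf_mult:
  fixes p q :: "('a::monoid_add) \<Rightarrow>\<^sub>0 ('c::comm_semiring_1)"
  assumes hadd: "\<And>a b. h (a + b) = h a + (h b :: 'b::monoid_add)"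
  shows "pf h (p * q) = pf h p * pf h q"
proof -
  have "pf h (p * q) = (\<Sum>a\<in>Poly_Mapping.keys p. \<Sum>b\<in>Poly_Mapping.keys q.
      Poly_Mapping.single (h a + h b) (Poly_Mapping.lookup p a * Poly_Mapping.lookup q b))"
    by (subst pm_mult_expand) (simp add: pf_sum hadd)
  also have "\<dots> = pf h p * pf h q"
    by (simp add: pf_def sum_product mult_single)
  finally show ?thesis .
qed

section \<open>Monomials and multisets\<close>

definition mon :: "'a multiset \<Rightarrow> ('a \<Rightarrow>\<^sub>0 nat)" where
  "mon M = Abs_poly_mapping (count M)"

lemma lookup_mon[simp]: "Poly_Mapping.lookup (mon M) = count M"
  unfolding mon_def by (rule Abs_poly_mapping_inverse) simp

lemma mon_plus: "mon (A + B) = mon A + mon B"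
  by (rule poly_mapping_eqI) (simp add: lookup_add)

lemma mon_empty[simp]: "mon {#} = 0"
  by (rule poly_mapping_eqI) simp

lemma keys_mon[simp]: "Poly_Mapping.keys (mon M) = set_mset M"
  by (auto simp: in_keys_iff)

lemma mon_inj: "mon A = mon B \<longleftrightarrow> A = B"
  by (metis lookup_mon multiset_eqI)

definition msf :: "('a \<Rightarrow>\<^sub>0 nat) \<Rightarrow> 'a multiset" where
  "msf mo = Abs_multiset (Poly_Mapping.lookup mo)"

lemma count_msf[simp]: "count (msf mo) = Poly_Mapping.lookup mo"
  unfolding msf_def by (rule count_Abs_multiset) simp

lemma mon_msf[simp]: "mon (msf mo) = mo"
  by (rule poly_mapping_eqI) simp

lemma msf_mon[simp]: "msf (mon M) = M"
  by (rule multiset_eqI) simp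

lemma msf_plus: "msf (a + b) = msf a + msf b"
  by (rule multiset_eqI) (simp add: lookup_add)

lemma set_msf: "set_mset (msf mo) = Poly_Mapping.keys mo"
  by (auto simp: in_keys_iff set_mset_def)

lemma mon_deg_size: "mon_deg mo = size (msf mo)"
proof -
  have "size (msf mo) = (\<Sum>x\<in>set_mset (msf mo). count (msf mo) x)"
    by (rule size_multiset_overloaded_eq)
  then show ?thesis by (simp add: mon_deg_def set_msf)
qed

lemma mon_deg_mon: "mon_deg (mon M) = size M"
  by (metis mon_deg_size msf_mon)

lemma emi_add: "edge_mon_image (a + b) = edge_mon_image a + edge_mon_image b"
  unfolding edge_mon_image_def
  by (rule setsum_keys_plus_distrib) (auto simp: single_add sum.distrib)

lemma emi_zero[simp]: "edge_mon_image 0 = 0"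
  by (simp add: edge_mon_image_def)

lemma emi_single: "edge_mon_image (Poly_Mapping.single e c) = (\<Sum>j\<in>e. Poly_Mapping.single j c)"
  by (cases "c = 0") (simp_all add: edge_mon_image_def)

lemma vdeg_empty[simp]: "vdeg {#} v = 0" by (simp add: vdeg_def)
lemma vdeg_add_mset: "vdeg (add_mset e M) v = vdeg M v + (if v \<in> e then 1 else 0)"
  by (simp add: vdeg_def)
lemma vdeg_plus: "vdeg (A + B) v = vdeg A v + vdeg B v"
  by (simp add: vdeg_def)

lemma mon_add_mset: "mon (add_mset e M) = Poly_Mapping.single e 1 + mon M"
  by (rule poly_mapping_eqI) (simp add: lookup_add lookup_single when_def)

lemma lookup_emi_mon:
  assumes "\<forall>e\<in>set_mset M. finite e"
  shows "Poly_Mapping.lookup (edge_mon_image (mon M)) v = vdeg M v"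
  using assms
proof (induction M)
  case empty then show ?case by simp
next
  case (add e M)
  have "Poly_Mapping.lookup (\<Sum>j\<in>e. Poly_Mapping.single j (1::nat)) v = (if v \<in> e then 1 else 0)"
    using add.prems by (simp add: lookup_sum lookup_single when_def)
  then show ?case using add
    by (simp add: mon_add_mset emi_add emi_single lookup_add vdeg_add_mset)
qed


definition T :: "'a multiset \<Rightarrow> ('a \<Rightarrow>\<^sub>0 nat) \<Rightarrow>\<^sub>0 'k::field" where
  "T M = Poly_Mapping.single (mon M) 1"

lemma T_plus: "T (A + B) = T A * (T B :: _ \<Rightarrow>\<^sub>0 'k::field)"
  by (simp add: T_def mult_single mon_plus)

lemma T_empty: "T {#} = (1 :: _ \<Rightarrow>\<^sub>0 'k::field)"
  by (simp add: T_def)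

lemma T_inj: "(T A :: _ \<Rightarrow>\<^sub>0 'k::field) = T B \<longleftrightarrow> A = B"
  by (metis T_def lookup_single_eq lookup_single_not_eq mon_inj zero_neq_one)

section \<open>The polynomial ring\<close>

lemma keys_add_nat: "Poly_Mapping.keys (a + b :: 'a \<Rightarrow>\<^sub>0 nat) = Poly_Mapping.keys a \<union> Poly_Mapping.keys b"
  by (auto simp: in_keys_iff lookup_add)

lemma ring_zero[simp]: "(0::'k::field tpoly) \<in> tpoly_ring E"
  by (simp add: tpoly_ring_def)

lemma ring_add: "p \<in> tpoly_ring E \<Longrightarrow> q \<in> tpoly_ring E \<Longrightarrow> (p + q :: 'k::field tpoly) \<in> tpoly_ring E"
  unfolding tpoly_ring_def by (auto dest: subsetD[OF keys_add])

lemma ring_uminus: "p \<in> tpoly_ring E \<Longrightarrow> (- p :: 'k::field tpoly) \<in> tpoly_ring E"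
  unfolding tpoly_ring_def by (auto simp: in_keys_iff)

lemma ring_diff: "p \<in> tpoly_ring E \<Longrightarrow> q \<in> tpoly_ring E \<Longrightarrow> (p - q :: 'k::field tpoly) \<in> tpoly_ring E"
  using ring_add[of p E "- q"] ring_uminus[of q E] by simp

lemma ring_mult: "p \<in> tpoly_ring E \<Longrightarrow> q \<in> tpoly_ring E \<Longrightarrow> (p * q :: 'k::field tpoly) \<in> tpoly_ring E"
proof -
  assume p: "p \<in> tpoly_ring E" and q: "q \<in> tpoly_ring E"
  show ?thesis unfolding tpoly_ring_def
  proof (rule CollectI, rule ballI)
    fix mo assume "mo \<in> Poly_Mapping.keys (p * q)"
    then obtain a b where "mo = a + b" "a \<in> Poly_Mapping.keys p" "b \<in> Poly_Mapping.keys q"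
      using keys_mult[of p q] by blast
    then show "Poly_Mapping.keys mo \<subseteq> E" using p q unfolding tpoly_ring_def by (auto simp: keys_add_nat)
  qed
qed

lemma ring_single: "Poly_Mapping.keys mo \<subseteq> E \<Longrightarrow> (Poly_Mapping.single mo c :: 'k::field tpoly) \<in> tpoly_ring E"
  unfolding tpoly_ring_def by auto

lemma ring_T: "set_mset M \<subseteq> E \<Longrightarrow> (T M :: 'k::field tpoly) \<in> tpoly_ring E"
  unfolding T_def by (rule ring_single) simp

lemma ring_const: "(Poly_Mapping.single 0 c :: 'k::field tpoly) \<in> tpoly_ring E"
  by (rule ring_single) simp

lemma ring_keys: "p \<in> tpoly_ring E \<Longrightarrow> mo \<in> Poly_Mapping.keys p \<Longrightarrow> Poly_Mapping.keys mo \<subseteq> E"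
  unfolding tpoly_ring_def by auto

section \<open>Generated ideal\<close>

lemma ig_zero: "0 \<in> ideal_gen_in R G"
  unfolding ideal_gen_in_def by (rule CollectI, rule exI[of _ "{}"]) auto

lemma ig_gen: "g \<in> G \<Longrightarrow> 1 \<in> R \<Longrightarrow> g \<in> ideal_gen_in R G"
  unfolding ideal_gen_in_def by (rule CollectI, rule exI[of _ "{g}"], rule exI[of _ "\<lambda>_. 1"]) auto

lemma ig_add:
  assumes "p \<in> ideal_gen_in R G" "q \<in> ideal_gen_in R G" "0 \<in> R"
    and radd: "\<And>a b. a \<in> R \<Longrightarrow> b \<in> R \<Longrightarrow> a + b \<in> R"
  shows "p + q \<in> ideal_gen_in R G"
proof -
  obtain F1 c1 where 1: "finite F1" "F1 \<subseteq> G" "\<forall>g\<in>F1. c1 g \<in> R" "p = (\<Sum>g\<in>F1. c1 g * g)"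
    using assms(1) unfolding ideal_gen_in_def by blast
  obtain F2 c2 where 2: "finite F2" "F2 \<subseteq> G" "\<forall>g\<in>F2. c2 g \<in> R" "q = (\<Sum>g\<in>F2. c2 g * g)"
    using assms(2) unfolding ideal_gen_in_def by blast
  define c where "c g = (if g \<in> F1 then c1 g else 0) + (if g \<in> F2 then c2 g else 0)" for g
  have "(\<Sum>g\<in>F1 \<union> F2. c g * g) = (\<Sum>g\<in>F1 \<union> F2. (if g \<in> F1 then c1 g * g else 0)) + (\<Sum>g\<in>F1 \<union> F2. (if g \<in> F2 then c2 g * g else 0))"
    unfolding sum.distrib[symmetric] by (rule sum.cong) (auto simp: c_def distrib_right)
  also have "\<dots> = p + q"
    using 1 2 by (simp add: sum.If_cases Int_absorb1 Int_absorb2)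
  finally have "p + q = (\<Sum>g\<in>F1 \<union> F2. c g * g)" by simp
  moreover have "\<forall>g\<in>F1 \<union> F2. c g \<in> R"
  proof
    fix g assume "g \<in> F1 \<union> F2"
    have a: "(if g \<in> F1 then c1 g else 0) \<in> R" using 1(3) assms(3) by simp
    have b: "(if g \<in> F2 then c2 g else 0) \<in> R" using 2(3) assms(3) by simp
    show "c g \<in> R" unfolding c_def by (rule radd[OF a b])
  qed
  moreover have "finite (F1 \<union> F2)" "F1 \<union> F2 \<subseteq> G" using 1 2 by auto
  ultimately show ?thesis
    unfolding ideal_gen_in_def by (intro CollectI exI[of _ "F1 \<union> F2"] exI[of _ c]) simp
qed

lemma ig_mult:
  assumes "p \<in> ideal_gen_in R G" "r \<in> R"
    and rmult: "\<And>a b. a \<in> R \<Longrightarrow> b \<in> R \<Longrightarrow> a * b \<in> R"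
  shows "r * p \<in> ideal_gen_in R G"
proof -
  obtain F c where 1: "finite F" "F \<subseteq> G" "\<forall>g\<in>F. c g \<in> R" "p = (\<Sum>g\<in>F. c g * g)"
    using assms(1) unfolding ideal_gen_in_def by blast
  have "r * p = (\<Sum>g\<in>F. (r * c g) * g)"
    by (simp add: 1 sum_distrib_left mult.assoc)
  moreover have "\<forall>g\<in>F. r * c g \<in> R" using 1 assms rmult by auto
  ultimately show ?thesis using 1 unfolding ideal_gen_in_def
    by (intro CollectI exI[of _ F] exI[of _ "\<lambda>g. r * c g"]) simp
qed

abbreviation JJ :: "nat set set \<Rightarrow> nat \<Rightarrow> ('k::field) tpoly set" where
  "JJ E d \<equiv> ideal_gen_in (tpoly_ring E) {p \<in> toric_ideal E. tdeg p \<le> d}"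

lemma J_add: "p \<in> JJ E d \<Longrightarrow> q \<in> JJ E d \<Longrightarrow> p + q \<in> JJ E d"
  by (rule ig_add) (auto intro: ring_add)

lemma J_mult: "p \<in> JJ E d \<Longrightarrow> r \<in> tpoly_ring E \<Longrightarrow> r * p \<in> JJ E d"
  by (rule ig_mult) (auto intro: ring_mult)

lemma J_zero: "0 \<in> JJ E d" by (rule ig_zero)

lemma J_uminus: "p \<in> JJ E d \<Longrightarrow> - p \<in> JJ E d"
  using J_mult[of p E d "Poly_Mapping.single 0 (-1)"] ring_const[of "-1" E]
  by (simp add: single_uminus)

lemma J_sum: "finite I \<Longrightarrow> (\<And>i. i \<in> I \<Longrightarrow> f i \<in> JJ E d) \<Longrightarrow> (\<Sum>i\<in>I. f i) \<in> JJ E d"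
  by (induction I rule: finite_induct) (auto intro: J_add J_zero)

section \<open>Toric ideal\<close>

lemma toric_map_pf: "toric_map p = pf edge_mon_image p"
  by (simp add: toric_map_def pf_def)

lemma toric_mult: "toric_map (p * q) = toric_map p * (toric_map q :: 'k::field xpoly)"
  unfolding toric_map_pf by (rule pf_mult) (rule emi_add)

lemma toric_add: "toric_map (p + q) = toric_map p + (toric_map q :: 'k::field xpoly)"
  unfolding toric_map_pf by (rule pf_add)

lemma toric_ideal_mult: "p \<in> toric_ideal E \<Longrightarrow> r \<in> tpoly_ring E \<Longrightarrow> (r * p :: 'k::field tpoly) \<in> toric_ideal E"
  unfolding toric_ideal_def by (auto simp: toric_mult intro: ring_mult)

lemma toric_ideal_add: "p \<in> toric_ideal E \<Longrightarrow> q \<in> toric_ideal E \<Longrightarrow> (p + q :: 'k::field tpoly) \<in> toric_ideal E"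
  unfolding toric_ideal_def by (auto simp: toric_add intro: ring_add)

lemma J_sub_toric: "JJ E d \<subseteq> (toric_ideal E :: 'k::field tpoly set)"
proof
  fix p :: "'k tpoly" assume "p \<in> JJ E d"
  then obtain F c where 1: "finite F" "F \<subseteq> {p \<in> toric_ideal E. tdeg p \<le> d}" "\<forall>g\<in>F. c g \<in> tpoly_ring E" "p = (\<Sum>g\<in>F. c g * g)"
    unfolding ideal_gen_in_def by blast
  have "(\<Sum>g\<in>F. c g * g) \<in> toric_ideal E"
    using 1(1-3)
  proof (induction F rule: finite_induct)
    case empty then show ?case by (simp add: toric_ideal_def toric_map_def)
  next
    case (insert x F)
    have "c x * x \<in> toric_ideal E"
      using insert.prems by (intro toric_ideal_mult) auto
    moreover have "(\<Sum>g\<in>F. c g * g) \<in> toric_ideal E"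
      using insert by auto
    ultimately show ?case using insert.hyps by (simp add: toric_ideal_add)
  qed
  then show "p \<in> toric_ideal E" using 1(4) by simp
qed


locale hgl =
  fixes m k :: nat and E :: "nat set set"
  assumes hg: "hypergraph m E" and un: "uniform k E"
begin

lemma edge_fin: "e \<in> E \<Longrightarrow> finite e"
  using hg unfolding hypergraph_def by (meson finite_atLeastAtMost finite_subset)

lemma edge_ne: "e \<in> E \<Longrightarrow> e \<noteq> {}"
  using hg unfolding hypergraph_def by blast

lemma edge_sub: "e \<in> E \<Longrightarrow> e \<subseteq> {1..m}"
  using hg unfolding hypergraph_def by blast

lemma edge_card: "e \<in> E \<Longrightarrow> card e = k"
  using un unfolding uniform_def by blast

lemma vdeg_sum: "set_mset M \<subseteq> E \<Longrightarrow> (\<Sum>j\<in>{1..m}. vdeg M j) = k * size M"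
proof (induction M)
  case empty then show ?case by simp
next
  case (add e M)
  have e: "e \<in> E" using add.prems by simp
  have "(\<Sum>j\<in>{1..m}. (if j \<in> e then 1 else 0::nat)) = card ({1..m} \<inter> e)"
    by (simp add: sum.If_cases)
  also have "\<dots> = k" using edge_sub[OF e] edge_card[OF e] by (simp add: Int_absorb1)
  finally have "(\<Sum>j\<in>{1..m}. (if j \<in> e then 1 else 0::nat)) = k" .
  then show ?case using add by (simp add: vdeg_add_mset sum.distrib)
qed

lemma bal_empty: "set_mset B \<subseteq> E \<Longrightarrow> (\<And>j. vdeg B j = 0) \<Longrightarrow> B = {#}"
proof (rule ccontr)
  assume "set_mset B \<subseteq> E" "\<And>j. vdeg B j = 0" "B \<noteq> {#}"
  then obtain e where e: "e \<in># B" by blast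
  then have "e \<in> E" using \<open>set_mset B \<subseteq> E\<close> by blast
  then obtain j where "j \<in> e" using edge_ne by blast
  then have "e \<in># filter_mset (\<lambda>e. j \<in> e) B" using e by simp
  then have "filter_mset (\<lambda>e. j \<in> e) B \<noteq> {#}" by auto
  then have "vdeg B j > 0" unfolding vdeg_def by (metis neq0_conv size_eq_0_iff_empty)
  then show False using \<open>\<And>j. vdeg B j = 0\<close> by simp
qed

lemma bal_size:
  assumes "set_mset A \<subseteq> E" "set_mset B \<subseteq> E" "\<And>j. vdeg A j = vdeg B j"
  shows "size A = size B"
proof (cases "A = {#}")
  case True
  then have "B = {#}" using bal_empty[of B] assms by (metis vdeg_empty)
  then show ?thesis using True by simp
next
  case False
  then obtain e where "e \<in># A" by blast
  then have "k = card e" using assms(1) edge_card by auto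
  moreover have "card e > 0" using \<open>e \<in># A\<close> assms(1) edge_fin edge_ne by (simp add: card_gt_0_iff subset_iff)
  ultimately have "k > 0" by simp
  have "k * size A = k * size B" using vdeg_sum[OF assms(1)] vdeg_sum[OF assms(2)] assms(3) by simp
  then show ?thesis using \<open>k > 0\<close> by simp
qed

lemma emi_eq_iff:
  assumes "set_mset A \<subseteq> E" "set_mset B \<subseteq> E"
  shows "edge_mon_image (mon A) = edge_mon_image (mon B) \<longleftrightarrow> (\<forall>j. vdeg A j = vdeg B j)"
proof -
  have "\<forall>e\<in>set_mset A. finite e" "\<forall>e\<in>set_mset B. finite e" using assms edge_fin by auto
  then show ?thesis by (auto simp: poly_mapping_eq_iff fun_eq_iff lookup_emi_mon)
qed

lemma T_diff_toric:
  assumes "set_mset A \<subseteq> E" "set_mset B \<subseteq> E" "\<And>j. vdeg A j = vdeg B j"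
  shows "(T A - T B :: 'k::field tpoly) \<in> toric_ideal E"
proof -
  have "toric_map (T A - T B :: 'k tpoly) = 0"
    using emi_eq_iff[OF assms(1,2)] assms(3) by (simp add: toric_map_pf pf_diff T_def)
  moreover have "(T A - T B :: 'k tpoly) \<in> tpoly_ring E"
    using assms by (intro ring_diff ring_T)
  ultimately show ?thesis unfolding toric_ideal_def by simp
qed

end

lemma tdeg_T_diff: "tdeg (T A - T B :: 'k::field tpoly) \<le> max (size A) (size B)"
proof -
  have "Poly_Mapping.keys (T A - T B :: 'k tpoly) \<subseteq> {mon A, mon B}"
    by (auto simp: T_def in_keys_iff lookup_minus lookup_single when_def split: if_splits)
  then have "\<forall>mo\<in>Poly_Mapping.keys (T A - T B :: 'k tpoly). mon_deg mo \<le> max (size A) (size B)"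
    by (auto simp: mon_deg_mon)
  then show ?thesis unfolding tdeg_def by (auto simp: finite_keys)
qed

definition rl :: "'k::field itself \<Rightarrow> nat set set \<Rightarrow> nat \<Rightarrow> nat set multiset \<Rightarrow> nat set multiset \<Rightarrow> bool" where
  "rl K E d A B \<longleftrightarrow> (T A - T B :: 'k tpoly) \<in> JJ E d"

lemma rl_refl: "rl K E d A A"
  by (simp add: rl_def J_zero)

lemma rl_sym: "rl K E d A B \<Longrightarrow> rl K E d B A"
  unfolding rl_def using J_uminus by fastforce

lemma rl_trans: "rl K E d A B \<Longrightarrow> rl K E d B C \<Longrightarrow> rl K E d A C"
  unfolding rl_def using J_add by fastforce

lemma rl_add: "rl K E d A B \<Longrightarrow> set_mset C \<subseteq> E \<Longrightarrow> rl K E d (C + A) (C + B)"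
  unfolding rl_def
proof -
  fix K :: "'k::field itself"
  assume a: "(T A - T B :: 'k tpoly) \<in> JJ E d" and c: "set_mset C \<subseteq> E"
  have "(T (C + A) - T (C + B) :: 'k tpoly) = T C * (T A - T B)"
    by (simp add: T_plus right_diff_distrib)
  then show "(T (C + A) - T (C + B) :: 'k tpoly) \<in> JJ E d"
    using J_mult[OF a ring_T[OF c]] by simp
qed

lemma (in hgl) rl_gen:
  assumes "set_mset A \<subseteq> E" "set_mset B \<subseteq> E" "\<And>j. vdeg A j = vdeg B j" "size A \<le> d"
  shows "rl (K::'k::field itself) E d A B"
proof -
  have "size B = size A" using bal_size assms by metis
  then have "tdeg (T A - T B :: 'k tpoly) \<le> d" using tdeg_T_diff[of A B] assms(4) by (metis max.idem order_trans)
  moreover have "(T A - T B :: 'k tpoly) \<in> toric_ideal E" using T_diff_toric assms by blast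
  ultimately show ?thesis unfolding rl_def by (intro ig_gen) (auto simp: tpoly_ring_def)
qed

lemma (in hgl) toric_sub_J:
  assumes allrl: "\<And>A B. set_mset A \<subseteq> E \<Longrightarrow> set_mset B \<subseteq> E \<Longrightarrow> (\<And>j. vdeg A j = vdeg B j) \<Longrightarrow> rl (TYPE('k::field)) E d A B"
  shows "toric_ideal E \<subseteq> (JJ E d :: 'k tpoly set)"
proof
  fix p :: "'k tpoly" assume p: "p \<in> toric_ideal E"
  have pr: "p \<in> tpoly_ring E" and pz: "toric_map p = 0" using p unfolding toric_ideal_def by auto
  define rep where "rep x = (SOME k'. k' \<in> Poly_Mapping.keys p \<and> edge_mon_image k' = x)" for x
  define r where "r k = rep (edge_mon_image k)" for k
  have rk: "r k \<in> Poly_Mapping.keys p \<and> edge_mon_image (r k) = edge_mon_image k" if "k \<in> Poly_Mapping.keys p" for k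
    unfolding r_def rep_def by (rule someI[of _ k]) (use that in simp)
  have "p = (\<Sum>k\<in>Poly_Mapping.keys p. Poly_Mapping.single k (Poly_Mapping.lookup p k))"
    by (rule pm_expand)
  also have "\<dots> = (\<Sum>k\<in>Poly_Mapping.keys p. Poly_Mapping.single k (Poly_Mapping.lookup p k) - Poly_Mapping.single (r k) (Poly_Mapping.lookup p k)) + pf r p"
    by (simp add: pf_def sum_subtractf)
  also have "pf r p = 0"
  proof (rule poly_mapping_eqI)
    fix y
    show "Poly_Mapping.lookup (pf r p) y = Poly_Mapping.lookup 0 y"
    proof (cases "\<exists>k0\<in>Poly_Mapping.keys p. r k0 = y")
      case True
      then obtain k0 where k0: "k0 \<in> Poly_Mapping.keys p" "r k0 = y" by blast
      have "{k \<in> Poly_Mapping.keys p. r k = y} = {k \<in> Poly_Mapping.keys p. edge_mon_image k = edge_mon_image k0}"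
      proof (intro Collect_cong conj_cong refl iffI)
        fix k assume "k \<in> Poly_Mapping.keys p" "r k = y"
        then show "edge_mon_image k = edge_mon_image k0" using rk[of k] rk[OF k0(1)] k0(2) by metis
      next
        fix k assume "k \<in> Poly_Mapping.keys p" "edge_mon_image k = edge_mon_image k0"
        then show "r k = y" using k0(2) by (simp add: r_def)
      qed
      then have "Poly_Mapping.lookup (pf r p) y = Poly_Mapping.lookup (toric_map p) (edge_mon_image k0)"
        by (simp add: lookup_pf toric_map_pf)
      then show ?thesis using pz by simp
    next
      case False
      then have e: "{k \<in> Poly_Mapping.keys p. r k = y} = {}" by auto
      show ?thesis unfolding lookup_pf e by simp
    qed
  qed
  finally have peq: "p = (\<Sum>k\<in>Poly_Mapping.keys p. Poly_Mapping.single k (Poly_Mapping.lookup p k) - Poly_Mapping.single (r k) (Poly_Mapping.lookup p k))"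
    by simp
  have "(\<Sum>k\<in>Poly_Mapping.keys p. Poly_Mapping.single k (Poly_Mapping.lookup p k) - Poly_Mapping.single (r k) (Poly_Mapping.lookup p k)) \<in> JJ E d"
  proof (rule J_sum)
    fix k assume k: "k \<in> Poly_Mapping.keys p"
    have kE: "set_mset (msf k) \<subseteq> E" using ring_keys[OF pr k] by (simp add: set_msf)
    have rE: "set_mset (msf (r k)) \<subseteq> E" using ring_keys[OF pr] rk[OF k] by (simp add: set_msf)
    have "\<forall>j. vdeg (msf k) j = vdeg (msf (r k)) j"
      using emi_eq_iff[OF kE rE] rk[OF k] by simp
    then have "rl TYPE('k) E d (msf k) (msf (r k))" using allrl kE rE by blast
    then have "(T (msf k) - T (msf (r k)) :: 'k tpoly) \<in> JJ E d" by (simp add: rl_def)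
    from J_mult[OF this ring_const[of "Poly_Mapping.lookup p k" E]]
    show "(Poly_Mapping.single k (Poly_Mapping.lookup p k) - Poly_Mapping.single (r k) (Poly_Mapping.lookup p k)) \<in> JJ E d"
      by (simp add: T_def right_diff_distrib mult_single)
  qed simp
  then show "p \<in> JJ E d" using peq by simp
qed


lemma balanced_swap: "balanced E (prod.swap X) \<longleftrightarrow> balanced E X"
  unfolding balanced_def bsupp_def by (cases X) (auto simp: add.commute)

lemma reducible_swap:
  assumes "reducible_with E (add_both (B, R) S) G1 S G2"
  shows "reducible_with E (add_both (R, B) S) (prod.swap G2) S (prod.swap G1)"
proof -
  obtain b1 r1 where G1: "G1 = (b1, r1)" by (cases G1)
  obtain b2 r2 where G2: "G2 = (b2, r2)" by (cases G2)
  have a: "balanced E (B + S, R + S)" "S \<noteq> {#}" "set_mset S \<subseteq> bsupp (B + S, R + S)"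
    "balanced E (b1, r1)" "balanced E (b2, r2)" "(b1, r1) \<noteq> (B + S, R + S)" "(b2, r2) \<noteq> (B + S, R + S)"
    "S = r1 \<inter># b2" "B + S + (R + S) = b1 + r1 + b2 + r2"
    "r1 \<subseteq># R + S" "r2 \<subseteq># R + S" "b1 \<subseteq># B + S" "b2 \<subseteq># B + S"
    using assms unfolding reducible_with_def add_both_def G1 G2 by auto
  have b: "balanced E (R + S, B + S)" "balanced E (r1, b1)" "balanced E (r2, b2)"
    using a balanced_swap[of E "(B + S, R + S)"] balanced_swap[of E "(b1, r1)"] balanced_swap[of E "(b2, r2)"] by auto
  have c: "set_mset S \<subseteq> bsupp (R + S, B + S)" using a(3) by (simp add: bsupp_def add.commute)
  have d: "R + S + (B + S) = r2 + b2 + r1 + b1" using a(9) by (simp add: ac_simps)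
  have e: "S = b2 \<inter># r1" using a(8) by (simp add: subset_mset.inf_commute)
  show ?thesis unfolding reducible_with_def add_both_def G1 G2
    using a b c d e by auto
qed

context hgl
begin

definition IHn :: "'k::field itself \<Rightarrow> nat \<Rightarrow> nat \<Rightarrow> bool" where
  "IHn K d n \<longleftrightarrow> (\<forall>X Y. set_mset X \<subseteq> E \<longrightarrow> set_mset Y \<subseteq> E \<longrightarrow> (\<forall>j. vdeg X j = vdeg Y j) \<longrightarrow> size X < n \<longrightarrow> rl K E d X Y)"

lemma IHnD: "IHn K d n \<Longrightarrow> set_mset X \<subseteq> E \<Longrightarrow> set_mset Y \<subseteq> E \<Longrightarrow> (\<And>j. vdeg X j = vdeg Y j) \<Longrightarrow> size X < n \<Longrightarrow> rl K E d X Y"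
  unfolding IHn_def by blast

lemma vdeg_minus: "A \<subseteq># M \<Longrightarrow> vdeg (M - A) j = vdeg M j - vdeg A j"
  by (metis subset_mset.diff_add vdeg_plus diff_add_inverse2)

lemma common_edge:
  assumes ih: "IHn K d n" and XE: "set_mset X \<subseteq> E" and YE: "set_mset Y \<subseteq> E"
    and v: "\<And>j. vdeg X j = vdeg Y j" and sz: "size X \<le> n" and x: "x \<in># X" "x \<in># Y"
  shows "rl K E d X Y"
proof -
  have "rl K E d (X - {#x#}) (Y - {#x#})"
  proof (rule IHnD[OF ih])
    show "set_mset (X - {#x#}) \<subseteq> E" "set_mset (Y - {#x#}) \<subseteq> E"
      using XE YE by (auto dest: in_diffD)
    show "vdeg (X - {#x#}) j = vdeg (Y - {#x#}) j" for j
      using x v[of j] by (simp add: vdeg_minus)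
    have "size X > 0" using x(1) by (metis gr0I size_eq_0_iff_empty empty_iff set_mset_empty)
    then show "size (X - {#x#}) < n" using sz x by (simp add: size_Diff_singleton)
  qed
  then have "rl K E d ({#x#} + (X - {#x#})) ({#x#} + (Y - {#x#}))"
    by (rule rl_add) (use XE x in auto)
  then show ?thesis using x by simp
qed

lemma red_facts:
  assumes "reducible_with E (add_both (B, R) S) (b1, r1) S (b2, r2)"
  shows "balanced E (b1, r1)" "balanced E (b2, r2)" "S = r1 \<inter># b2"
    "B + S + (R + S) = b1 + r1 + b2 + r2" "b2 \<subseteq># B + S" "r1 \<subseteq># R + S"
    "b1 \<subseteq># B + S" "r2 \<subseteq># R + S" "S \<noteq> {#}"
  using assms unfolding reducible_with_def add_both_def by auto

lemma bal_parts: "balanced E (X, Y) \<Longrightarrow> set_mset X \<subseteq> E \<and> set_mset Y \<subseteq> E \<and> (\<forall>j. vdeg X j = vdeg Y j)"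
  unfolding balanced_def bsupp_def by auto

lemma half:
  assumes ih: "IHn K d n" and bal: "balanced E (B, R)" and sz: "size B \<le> n"
    and red: "reducible_with E (add_both (B, R) S) (b1, r1) S (b2, r2)"
    and ne: "S \<noteq> b2"
  shows "rl K E d B (b1 + (b2 - S))" "set_mset (b1 + (b2 - S)) \<subseteq> E"
    "\<And>j. vdeg (b1 + (b2 - S)) j = vdeg B j"
proof -
  note f = red_facts[OF red]
  have BE: "set_mset B \<subseteq> E" and RE: "set_mset R \<subseteq> E" and vBR: "\<And>j. vdeg B j = vdeg R j"
    using bal_parts[OF bal] by auto
  note g1 = bal_parts[OF f(1)] and g2 = bal_parts[OF f(2)]
  have Sb2: "S \<subseteq># b2" using f(3) by simp
  show ME: "set_mset (b1 + (b2 - S)) \<subseteq> E" using g1 g2 by (auto dest: in_diffD)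
  show vM: "vdeg (b1 + (b2 - S)) j = vdeg B j" for j
  proof -
    have "vdeg (B + S + (R + S)) j = vdeg (b1 + r1 + b2 + r2) j" using f(4) by simp
    then have "vdeg B j + vdeg S j + vdeg R j + vdeg S j = vdeg b1 j + vdeg r1 j + vdeg b2 j + vdeg r2 j"
      by (simp add: vdeg_plus)
    moreover have "vdeg S j \<le> vdeg b2 j" using Sb2 by (metis le_add2 subset_mset.diff_add vdeg_plus)
    moreover have "vdeg b1 j = vdeg r1 j" "vdeg b2 j = vdeg r2 j" using g1 g2 by auto
    moreover have "vdeg (b1 + (b2 - S)) j = vdeg b1 j + (vdeg b2 j - vdeg S j)"
      by (simp add: vdeg_plus vdeg_minus[OF Sb2])
    ultimately show ?thesis using vBR[of j] by linarith
  qed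
  have "\<exists>x. x \<in># B \<and> x \<in># b1 + (b2 - S)"
  proof (rule ccontr)
    assume no: "\<not> ?thesis"
    have "b2 = S"
    proof (rule multiset_eqI)
      fix x
      have le: "count S x \<le> count b2 x" using Sb2 by (simp add: mset_subset_eq_count)
      have "count b2 x \<le> count S x"
      proof (cases "x \<in># B")
        case True
        then have "x \<notin># b2 - S" using no by auto
        then have "count (b2 - S) x = 0" by (simp add: not_in_iff)
        then show ?thesis by simp
      next
        case False
        then show ?thesis using f(5) by (metis add_0 count_union mset_subset_eq_count not_in_iff)
      qed
      then show "count b2 x = count S x" using le by simp
    qed
    then show False using ne by simp
  qed
  then obtain x where "x \<in># B" "x \<in># b1 + (b2 - S)" by blast
  then show "rl K E d B (b1 + (b2 - S))"
    using common_edge[OF ih BE ME _ sz] vM by metis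
qed

end


context hgl
begin

lemma sizes:
  assumes bal: "balanced E (B, R)" and red: "reducible_with E (add_both (B, R) S) (b1, r1) S (b2, r2)"
  shows "size b1 = size r1" "size b2 = size r2" "size B = size R"
    "size b1 + size b2 = size B + size S"
proof -
  note f = red_facts[OF red]
  note g1 = bal_parts[OF f(1)] and g2 = bal_parts[OF f(2)] and b = bal_parts[OF bal]
  show 1: "size b1 = size r1" using g1 bal_size by blast
  show 2: "size b2 = size r2" using g2 bal_size by blast
  show 3: "size B = size R" using b bal_size by blast
  have "size (B + S + (R + S)) = size (b1 + r1 + b2 + r2)" using f(4) by simp
  then show "size b1 + size b2 = size B + size S" using 1 2 3 by simp
qed

lemma proper_case:
  assumes ih: "IHn K d n" and bal: "balanced E (B, R)" and sz: "size B = n"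
    and red: "reducible_with E (add_both (B, R) S) G1 S G2"
    and pr: "proper_sep G1 S G2"
  shows "rl K E d B R"
proof -
  obtain b1 r1 where G1: "G1 = (b1, r1)" by (cases G1)
  obtain b2 r2 where G2: "G2 = (b2, r2)" by (cases G2)
  note red' = red[unfolded G1 G2]
  note f = red_facts[OF red']
  note g1 = bal_parts[OF f(1)] and g2 = bal_parts[OF f(2)]
  have p1: "S \<subset># r1" and p2: "S \<subset># b2" using pr by (auto simp: proper_sep_def G1 G2)
  note sz' = sizes[OF bal red']
  have "size S < size r1" "size S < size b2" using p1 p2 by (auto intro: mset_subset_size)
  then have s1: "size b1 < n" and s2: "size b2 < n" using sz' sz by linarith+
  have szB: "size B \<le> n" using sz by simp
  have szR: "size R \<le> n" using sz sz'(3) by simp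
  have ne2: "S \<noteq> b2" using p2 by auto
  have ne1: "S \<noteq> r1" using p1 by auto
  have h1: "rl K E d B (b1 + (b2 - S))" by (rule half(1)[OF ih bal szB red' ne2])
  have red2: "reducible_with E (add_both (R, B) S) (r2, b2) S (r1, b1)"
    using reducible_swap[OF red'] by simp
  have balR: "balanced E (R, B)" using balanced_swap[of E "(B,R)"] bal by simp
  have h2: "rl K E d R (r2 + (r1 - S))" by (rule half(1)[OF ih balR szR red2 ne1])
  have b1E: "set_mset b1 \<subseteq> E" and r1E: "set_mset r1 \<subseteq> E" and v1: "\<And>j. vdeg b1 j = vdeg r1 j"
    using g1 by auto
  have b2E: "set_mset b2 \<subseteq> E" and r2E: "set_mset r2 \<subseteq> E" and v2: "\<And>j. vdeg b2 j = vdeg r2 j"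
    using g2 by auto
  have "rl K E d b1 r1" by (rule IHnD[OF ih b1E r1E v1 s1])
  moreover have "set_mset (b2 - S) \<subseteq> E" using b2E by (meson in_diffD subset_iff)
  ultimately have "rl K E d ((b2 - S) + b1) ((b2 - S) + r1)" by (rule rl_add)
  moreover have "(b2 - S) + r1 = (r1 - S) + b2"
  proof (rule multiset_eqI)
    fix x
    have "count S x \<le> count r1 x" "count S x \<le> count b2 x"
      using p1 p2 by (simp_all add: subset_mset.less_imp_le mset_subset_eq_count)
    then show "count ((b2 - S) + r1) x = count ((r1 - S) + b2) x" by simp
  qed
  moreover have "rl K E d ((r1 - S) + b2) ((r1 - S) + r2)"
  proof (rule rl_add)
    show "rl K E d b2 r2" by (rule IHnD[OF ih b2E r2E v2 s2])
    show "set_mset (r1 - S) \<subseteq> E" using r1E by (meson in_diffD subset_iff)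
  qed
  ultimately have "rl K E d (b1 + (b2 - S)) (r2 + (r1 - S))"
    by (metis add.commute rl_trans)
  then show ?thesis using h1 h2 by (meson rl_sym rl_trans)
qed

lemma blue_case:
  assumes ih: "IHn K d n" and bal: "balanced E (B, R)" and sz: "size B = n"
    and red: "reducible_with E (add_both (B, R) S) G1 S G2"
    and bs: "red G1 = S" and ssz: "size S < n"
  shows "rl K E d B (blue G2)" "set_mset (blue G2) \<subseteq> E" "\<And>j. vdeg (blue G2) j = vdeg B j"
    "size (blue G2) = n"
proof -
  obtain b1 r1 where G1: "G1 = (b1, r1)" by (cases G1)
  obtain b2 r2 where G2: "G2 = (b2, r2)" by (cases G2)
  note red' = red[unfolded G1 G2]
  note f = red_facts[OF red']
  note g1 = bal_parts[OF f(1)] and g2 = bal_parts[OF f(2)]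
  have r1: "r1 = S" using bs G1 by simp
  note sz' = sizes[OF bal red']
  have sb2: "size b2 = n" using sz' sz r1 by simp
  then show "size (blue G2) = n" using G2 by simp
  have ne: "S \<noteq> b2" using sb2 ssz by auto
  have szB: "size B \<le> n" using sz by simp
  note h = half[OF ih bal szB red' ne]
  have Sb2: "S \<subseteq># b2" using f(3) by simp
  have b1E: "set_mset b1 \<subseteq> E" and r1E: "set_mset r1 \<subseteq> E" and v1: "\<And>j. vdeg b1 j = vdeg r1 j"
    using g1 by auto
  have b2E: "set_mset b2 \<subseteq> E" using g2 by auto
  have s1: "size b1 < n" using sz' r1 ssz by simp
  have "rl K E d ((b2 - S) + b1) ((b2 - S) + r1)"
  proof (rule rl_add)
    show "rl K E d b1 r1" by (rule IHnD[OF ih b1E r1E v1 s1])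
    show "set_mset (b2 - S) \<subseteq> E" using b2E by (meson in_diffD subset_iff)
  qed
  then have "rl K E d ((b2 - S) + b1) ((b2 - S) + S)" using r1 by simp
  then have "rl K E d (b1 + (b2 - S)) b2" using Sb2 by (simp add: add.commute)
  then show "rl K E d B (blue G2)" using h(1) G2 sz by (auto intro: rl_trans)
  show "set_mset (blue G2) \<subseteq> E" using g2 G2 by simp
  show "vdeg (blue G2) j = vdeg B j" for j
  proof -
    have "vdeg S j \<le> vdeg b2 j" using Sb2 by (metis le_add2 subset_mset.diff_add vdeg_plus)
    moreover have "vdeg b1 j = vdeg S j" using v1 r1 by simp
    moreover have "vdeg (b1 + (b2 - S)) j = vdeg b1 j + (vdeg b2 j - vdeg S j)"
      by (simp add: vdeg_plus vdeg_minus[OF Sb2])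
    ultimately show ?thesis using h(3)[of j] G2 by simp
  qed
qed

end


context hgl
begin

lemma red_case:
  assumes ih: "IHn K d n" and bal: "balanced E (B, R)" and sz: "size B = n"
    and red: "reducible_with E (add_both (B, R) S) U1 S U2"
    and rs: "blue U2 = S" and ssz: "size S < n"
  shows "rl K E d R (red U1)" "set_mset (red U1) \<subseteq> E" "\<And>j. vdeg (red U1) j = vdeg R j"
    "size (red U1) = n"
proof -
  have red2: "reducible_with E (add_both (R, B) S) (prod.swap U2) S (prod.swap U1)"
    by (rule reducible_swap[OF red])
  have balR: "balanced E (R, B)" using balanced_swap[of E "(B,R)"] bal by simp
  have szR: "size R = n" using bal_parts[OF bal] bal_size sz by metis
  have rs': "red (prod.swap U2) = S" using rs by (cases U2) simp
  note bc = blue_case[OF ih balR szR red2 rs' ssz]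
  have e: "blue (prod.swap U1) = red U1" by (cases U1) simp
  show "rl K E d R (red U1)" using bc(1) e by simp
  show "set_mset (red U1) \<subseteq> E" using bc(2) e by simp
  show "vdeg (red U1) j = vdeg R j" for j using bc(3)[of j] e by simp
  show "size (red U1) = n" using bc(4) e by simp
qed

lemma sep_sub: "reducible_with E F G1 S G2 \<Longrightarrow> S \<subseteq># red G1 \<and> S \<subseteq># blue G2"
  unfolding reducible_with_def by (metis subset_mset.inf.cobounded1 subset_mset.inf.cobounded2)

lemma bal_pair: "balanced E X \<Longrightarrow> balanced E (blue X, red X)" by simp

lemma chain_back:
  assumes ih: "IHn K d n" and bal: "balanced E W" and sz: "size (blue W) = n"
    and ch: "splitting_chain E W n"
  shows "rl K E d (blue W) (red W)"
proof -
  obtain N S R G1 G2 U1 U2 where N1: "N \<ge> 1"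
    and steps: "\<forall>i\<in>{1..N}.
          blue_splitting_set_with E (chain_walk W G2 U1 (i - 1)) (G1 i) (S i) (G2 i) \<and>
          red_splitting_set_with E (chain_walk W G2 U1 (i - 1)) (U1 i) (R i) (U2 i) \<and>
          size (S i) < n \<and> size (R i) < n"
    and fin: "S N \<inter># R N \<noteq> {#} \<or> (\<exists>T. proper_splitting_set E (chain_walk W G2 U1 N) T)"
    using ch unfolding splitting_chain_def by blast
  define CW where "CW i = chain_walk W G2 U1 i" for i
  have CW0: "CW 0 = W" by (simp add: CW_def chain_walk_def)
  have CWS: "CW (Suc i) = (blue (G2 (Suc i)), red (U1 (Suc i)))" for i by (simp add: CW_def chain_walk_def)
  have stepi: "reducible_with E (add_both (blue (CW i), red (CW i)) (S (Suc i))) (G1 (Suc i)) (S (Suc i)) (G2 (Suc i))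
      \<and> red (G1 (Suc i)) = S (Suc i)
      \<and> reducible_with E (add_both (blue (CW i), red (CW i)) (R (Suc i))) (U1 (Suc i)) (R (Suc i)) (U2 (Suc i))
      \<and> blue (U2 (Suc i)) = R (Suc i) \<and> size (S (Suc i)) < n \<and> size (R (Suc i)) < n" if "i < N" for i
  proof -
    have "Suc i \<in> {1..N}" using that by simp
    then have "blue_splitting_set_with E (CW i) (G1 (Suc i)) (S (Suc i)) (G2 (Suc i)) \<and>
          red_splitting_set_with E (CW i) (U1 (Suc i)) (R (Suc i)) (U2 (Suc i)) \<and>
          size (S (Suc i)) < n \<and> size (R (Suc i)) < n"
      using steps unfolding CW_def by fastforce
    then show ?thesis
      unfolding blue_splitting_set_with_def red_splitting_set_with_def splitting_set_with_def
        blue_sep_def red_sep_def by simp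
  qed
  have wf: "balanced E (CW i) \<and> size (blue (CW i)) = n" if "i \<le> N" for i
    using that
  proof (induction i)
    case 0 then show ?case using bal sz CW0 by simp
  next
    case (Suc i)
    then have i: "i < N" by simp
    have b: "balanced E (blue (CW i), red (CW i))" and s: "size (blue (CW i)) = n" using Suc by auto
    note st = stepi[OF i]
    note bc = blue_case[OF ih b s conjunct1[OF st] conjunct1[OF conjunct2[OF st]]]
    note rc = red_case[OF ih b s conjunct1[OF conjunct2[OF conjunct2[OF st]]]]
    have rc': "rl K E d (red (CW i)) (red (U1 (Suc i)))" "set_mset (red (U1 (Suc i))) \<subseteq> E"
      "\<And>j. vdeg (red (U1 (Suc i))) j = vdeg (red (CW i)) j"
      using rc st by auto
    have bc': "set_mset (blue (G2 (Suc i))) \<subseteq> E" "\<And>j. vdeg (blue (G2 (Suc i))) j = vdeg (blue (CW i)) j"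
      "size (blue (G2 (Suc i))) = n"
      using bc st by auto
    have vb: "\<And>j. vdeg (blue (CW i)) j = vdeg (red (CW i)) j" using bal_parts[OF b] by auto
    show ?case unfolding CWS balanced_def bsupp_def using rc' bc' vb by auto
  qed
  have bk: "rl K E d (blue (CW (N - j))) (red (CW (N - j)))" if "j \<le> N" for j
    using that
  proof (induction j)
    case 0
    have b: "balanced E (blue (CW N), red (CW N))" and s: "size (blue (CW N)) = n" using wf[of N] by auto
    obtain N' where NN: "N = Suc N'" using N1 by (cases N) auto
    from fin show ?case
    proof
      assume "S N \<inter># R N \<noteq> {#}"
      then obtain x where x: "x \<in># S N \<inter># R N" by blast
      have "N' < N" using NN by simp
      note st = stepi[OF this, folded NN]
      have "S N \<subseteq># blue (G2 N)" using sep_sub[OF conjunct1[OF st]] by blast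
      moreover have "R N \<subseteq># red (U1 N)" using sep_sub[OF conjunct1[OF conjunct2[OF conjunct2[OF st]]]] by blast
      ultimately have "S N \<subseteq># blue (G2 N)" "R N \<subseteq># red (U1 N)" by blast+
      then have "x \<in># blue (CW N)" "x \<in># red (CW N)" using x CWS[of N'] NN
        by (auto dest: mset_subset_eqD)
      then show ?case using common_edge[OF ih _ _ _ _ ] bal_parts[OF b] s by simp
    next
      assume "\<exists>T. proper_splitting_set E (chain_walk W G2 U1 N) T"
      then obtain T Ga Gb where "reducible_with E (add_both (blue (CW N), red (CW N)) T) Ga T Gb" "proper_sep Ga T Gb"
        unfolding proper_splitting_set_def splitting_set_with_def CW_def by auto
      then show ?case using proper_case[OF ih b s] by simp
    qed
  next
    case (Suc j)
    define i where "i = N - Suc j"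
    have i: "i < N" and ii: "Suc i = N - j" using Suc.prems by (auto simp: i_def)
    have IH: "rl K E d (blue (CW (Suc i))) (red (CW (Suc i)))" using Suc ii by simp
    have b: "balanced E (blue (CW i), red (CW i))" and s: "size (blue (CW i)) = n" using wf[of i] i by auto
    note st = stepi[OF i]
    note bc = blue_case[OF ih b s conjunct1[OF st] conjunct1[OF conjunct2[OF st]]]
    note rc = red_case[OF ih b s conjunct1[OF conjunct2[OF conjunct2[OF st]]]]
    have "rl K E d (blue (CW i)) (blue (CW (Suc i)))" using bc(1) st CWS by auto
    moreover have "rl K E d (red (CW i)) (red (CW (Suc i)))" using rc(1) st CWS by auto
    ultimately show ?case using IH i_def by (metis rl_sym rl_trans)
  qed
  show ?thesis using bk[of N] CW0 by simp
qed

end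


context hgl
begin

lemma all_rl:
  assumes rhs: "\<forall>W n. primitive E W \<and> bsupp W \<subseteq> E \<and> bsize W = 2 * n \<and> n > d \<longrightarrow>
       (\<exists>S. proper_splitting_set E W S) \<or> splitting_chain E W n"
  shows "set_mset X \<subseteq> E \<Longrightarrow> set_mset Y \<subseteq> E \<Longrightarrow> (\<And>j. vdeg X j = vdeg Y j) \<Longrightarrow> rl K E d X Y"
proof (induction "size X" arbitrary: X Y rule: less_induct)
  case less
  define n where "n = size X"
  have ih: "IHn K d n" unfolding IHn_def n_def using less.hyps by blast
  have XE: "set_mset X \<subseteq> E" and YE: "set_mset Y \<subseteq> E" and v: "\<And>j. vdeg X j = vdeg Y j" using less.prems by auto
  have bal: "balanced E (X, Y)" unfolding balanced_def bsupp_def using XE YE v by auto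
  have szY: "size Y = n" using bal_size[OF XE YE v] n_def by simp
  show ?case
  proof (cases "size X \<le> d")
    case True then show ?thesis by (rule rl_gen[OF XE YE v])
  next
    case False
    show ?thesis
    proof (cases "primitive E (X, Y)")
      case True
      have "bsupp (X, Y) \<subseteq> E" using XE YE by (simp add: bsupp_def)
      moreover have "bsize (X, Y) = 2 * n" using szY n_def by (simp add: bsize_def)
      moreover have "n > d" using False n_def by simp
      moreover have "primitive E (X, Y) \<and> bsupp (X, Y) \<subseteq> E \<and> bsize (X, Y) = 2 * n \<and> n > d \<longrightarrow>
       (\<exists>S. proper_splitting_set E (X, Y) S) \<or> splitting_chain E (X, Y) n"
        using rhs by blast
      ultimately have "(\<exists>S. proper_splitting_set E (X, Y) S) \<or> splitting_chain E (X, Y) n"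
        using True by blast
      then show ?thesis
      proof
        assume "\<exists>S. proper_splitting_set E (X, Y) S"
        then obtain S G1 G2 where "reducible_with E (add_both (X, Y) S) G1 S G2" "proper_sep G1 S G2"
          unfolding proper_splitting_set_def splitting_set_with_def by blast
        then show ?thesis using proper_case[OF ih bal] n_def by blast
      next
        assume "splitting_chain E (X, Y) n"
        then show ?thesis using chain_back[OF ih bal] n_def by (simp only: fst_conv snd_conv)
      qed
    next
      case False
      have "\<exists>E'. balanced E E' \<and> E' \<noteq> ({#}, {#}) \<and> E' \<noteq> (X, Y) \<and> blue E' \<subset># X \<and> red E' \<subset># Y"
        using bal False unfolding primitive_def by simp blast
      then obtain E' where E': "balanced E E'" "E' \<noteq> ({#}, {#})" "blue E' \<subset># X" "red E' \<subset># Y"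
        by blast
      obtain X' Y' where EE: "E' = (X', Y')" by (cases E')
      have X'X: "X' \<subset># X" and Y'Y: "Y' \<subset># Y" using E' EE by auto
      note bp = bal_parts[OF E'(1)[unfolded EE]]
      have X'ne: "X' \<noteq> {#}"
      proof
        assume "X' = {#}"
        then have "Y' = {#}" using bal_empty[of Y'] bp by (metis vdeg_empty)
        then show False using \<open>X' = {#}\<close> E'(2) EE by simp
      qed
      have sX': "size X' < size X" using mset_subset_size[OF X'X] by simp
      have X'sub: "X' \<subseteq># X" using X'X by (rule subset_mset.less_imp_le)
      have Y'sub: "Y' \<subseteq># Y" using Y'Y by (rule subset_mset.less_imp_le)
      have "size X' > 0" using X'ne by (simp add: nonempty_has_size)
      then have sXX': "size (X - X') < size X" using size_Diff_submset[OF X'sub] sX' by simp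
      have r1: "rl K E d X' Y'"
        by (rule less.hyps[OF sX']) (use bp in auto)
      have DXE: "set_mset (X - X') \<subseteq> E" using XE by (meson in_diffD subset_iff)
      have DYE: "set_mset (Y - Y') \<subseteq> E" using YE by (meson in_diffD subset_iff)
      have vD: "vdeg (X - X') j = vdeg (Y - Y') j" for j
        using v[of j] bp by (simp add: vdeg_minus[OF X'sub] vdeg_minus[OF Y'sub])
      have r2: "rl K E d (X - X') (Y - Y')"
        by (rule less.hyps[OF sXX' DXE DYE vD])
      have "rl K E d ((X - X') + X') ((X - X') + Y')" by (rule rl_add[OF r1 DXE])
      moreover have "rl K E d (Y' + (X - X')) (Y' + (Y - Y'))"
        by (rule rl_add[OF r2]) (use bp in auto)
      ultimately show ?thesis using X'sub Y'sub
        by (metis add.commute rl_trans subset_mset.diff_add)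
    qed
  qed
qed

lemma backward:
  assumes rhs: "\<forall>W n. primitive E W \<and> bsupp W \<subseteq> E \<and> bsize W = 2 * n \<and> n > d \<longrightarrow>
       (\<exists>S. proper_splitting_set E W S) \<or> splitting_chain E W n"
  shows "generated_in_degree_at_most E d TYPE('k::field)"
  unfolding generated_in_degree_at_most_def
proof
  show "toric_ideal E \<subseteq> (JJ E d :: 'k tpoly set)"
    by (rule toric_sub_J) (rule all_rl[OF rhs])
  show "(JJ E d :: 'k tpoly set) \<subseteq> toric_ideal E" by (rule J_sub_toric)
qed

end


definition stepM :: "nat set set \<Rightarrow> nat \<Rightarrow> nat set multiset \<Rightarrow> nat set multiset \<Rightarrow> bool" where
  "stepM E d A A' \<longleftrightarrow> (\<exists>w u v. A = w + u \<and> A' = w + v \<and> set_mset (w + u + v) \<subseteq> E \<and>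
      (\<forall>j. vdeg u j = vdeg v j) \<and> size u \<le> d)"

definition lam :: "('a \<Rightarrow>\<^sub>0 nat) set \<Rightarrow> (('a \<Rightarrow>\<^sub>0 nat) \<Rightarrow>\<^sub>0 'k::field) \<Rightarrow> 'k" where
  "lam C p = (\<Sum>k\<in>Poly_Mapping.keys p. (if k \<in> C then Poly_Mapping.lookup p k else 0))"

lemma lam_add: "lam C (p + q) = lam C p + lam C q"
  unfolding lam_def by (rule setsum_keys_plus_distrib) auto

lemma lam_diff: "lam C (p - q) = lam C p - lam C q"
  using lam_add[of C "p - q" q] by (simp add: algebra_simps)

lemma lam_zero[simp]: "lam C 0 = 0" by (simp add: lam_def)

lemma lam_sum: "lam C (\<Sum>i\<in>I. f i) = (\<Sum>i\<in>I. lam C (f i))"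
  by (induction I rule: infinite_finite_induct) (auto simp: lam_add)

lemma lam_single: "lam C (Poly_Mapping.single k v) = (if k \<in> C then v else 0)"
  by (simp add: lam_def)

lemma tdeg_ge: "k \<in> Poly_Mapping.keys p \<Longrightarrow> mon_deg k \<le> tdeg p"
  unfolding tdeg_def by (auto intro: Max_ge)

context hgl
begin

lemma lam_mult_zero:
  fixes c g :: "'k::field tpoly"
  assumes c: "c \<in> tpoly_ring E" and g: "g \<in> toric_ideal E" and gd: "tdeg g \<le> d"
    and Cdef: "C = {mo. (stepM E d)\<^sup>*\<^sup>* B (msf mo)}"
  shows "lam C (c * g) = 0"
proof -
  have gr: "g \<in> tpoly_ring E" and gz: "toric_map g = 0" using g unfolding toric_ideal_def by auto
  have inner: "(\<Sum>b\<in>Poly_Mapping.keys g. (if a + b \<in> C then Poly_Mapping.lookup g b else 0)) = 0"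
    if a: "a \<in> Poly_Mapping.keys c" for a
  proof -
    define Q where "Q = {b \<in> Poly_Mapping.keys g. a + b \<in> C}"
    have fQ: "finite Q" unfolding Q_def by simp
    have "(\<Sum>b\<in>Poly_Mapping.keys g. (if a + b \<in> C then Poly_Mapping.lookup g b else 0)) = (\<Sum>b\<in>Q. Poly_Mapping.lookup g b)"
      unfolding Q_def by (simp add: sum.inter_filter)
    also have "\<dots> = (\<Sum>x\<in>edge_mon_image ` Q. \<Sum>b\<in>{b. b \<in> Q \<and> edge_mon_image b = x}. Poly_Mapping.lookup g b)"
      by (rule sum.image_gen[OF fQ])
    also have "\<dots> = 0"
    proof (rule sum.neutral, rule ballI)
      fix x assume "x \<in> edge_mon_image ` Q"
      then obtain b0 where b0: "b0 \<in> Q" "edge_mon_image b0 = x" by blast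
      have "{b. b \<in> Q \<and> edge_mon_image b = x} = {b \<in> Poly_Mapping.keys g. edge_mon_image b = x}"
      proof (intro Collect_cong iffI)
        fix b assume "b \<in> Q \<and> edge_mon_image b = x"
        then show "b \<in> Poly_Mapping.keys g \<and> edge_mon_image b = x" unfolding Q_def by simp
      next
        fix b assume b: "b \<in> Poly_Mapping.keys g \<and> edge_mon_image b = x"
        have aE: "set_mset (msf a) \<subseteq> E" using ring_keys[OF c a] by (simp add: set_msf)
        have b0k: "b0 \<in> Poly_Mapping.keys g" and b0C: "a + b0 \<in> C" using b0 unfolding Q_def by auto
        have b0E: "set_mset (msf b0) \<subseteq> E" using ring_keys[OF gr b0k] by (simp add: set_msf)
        have bE: "set_mset (msf b) \<subseteq> E" using ring_keys[OF gr] b by (simp add: set_msf)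
        have vv: "\<forall>j. vdeg (msf b0) j = vdeg (msf b) j"
          using emi_eq_iff[OF b0E bE] b b0 by simp
        have sz: "size (msf b0) \<le> d" using tdeg_ge[OF b0k] gd by (simp add: mon_deg_size)
        have "stepM E d (msf (a + b0)) (msf (a + b))"
          unfolding stepM_def msf_plus using aE b0E bE vv sz
          by (intro exI[of _ "msf a"] exI[of _ "msf b0"] exI[of _ "msf b"]) auto
        then have "a + b \<in> C" using b0C Cdef by (auto intro: rtranclp.rtrancl_into_rtrancl)
        then show "b \<in> Q \<and> edge_mon_image b = x" using b unfolding Q_def by simp
      qed
      then show "(\<Sum>b\<in>{b. b \<in> Q \<and> edge_mon_image b = x}. Poly_Mapping.lookup g b) = 0"
        using gz lookup_pf[of edge_mon_image g x] by (simp add: toric_map_pf)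
    qed
    finally show ?thesis .
  qed
  have "lam C (c * g) = (\<Sum>a\<in>Poly_Mapping.keys c. \<Sum>b\<in>Poly_Mapping.keys g.
      (if a + b \<in> C then Poly_Mapping.lookup c a * Poly_Mapping.lookup g b else 0))"
    by (subst pm_mult_expand) (simp add: lam_sum lam_single)
  also have "\<dots> = (\<Sum>a\<in>Poly_Mapping.keys c. Poly_Mapping.lookup c a *
      (\<Sum>b\<in>Poly_Mapping.keys g. (if a + b \<in> C then Poly_Mapping.lookup g b else 0)))"
    unfolding sum_distrib_left by (intro sum.cong refl) simp
  also have "\<dots> = 0" using inner by simp
  finally show ?thesis .
qed

lemma path_exists:
  assumes gen: "generated_in_degree_at_most E d TYPE('k::field)"
    and BE: "set_mset B \<subseteq> E" and RE: "set_mset R \<subseteq> E" and v: "\<And>j. vdeg B j = vdeg R j"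
  shows "(stepM E d)\<^sup>*\<^sup>* B R"
proof -
  define C where "C = {mo. (stepM E d)\<^sup>*\<^sup>* B (msf mo)}"
  have "(T B - T R :: 'k tpoly) \<in> toric_ideal E" by (rule T_diff_toric[OF BE RE v])
  then have "(T B - T R :: 'k tpoly) \<in> JJ E d" using gen unfolding generated_in_degree_at_most_def by simp
  then obtain F c where F: "finite F" "F \<subseteq> {p \<in> toric_ideal E. tdeg p \<le> d}" "\<forall>g\<in>F. c g \<in> tpoly_ring E"
    "(T B - T R :: 'k tpoly) = (\<Sum>g\<in>F. c g * g)"
    unfolding ideal_gen_in_def by blast
  have "lam C (T B - T R :: 'k tpoly) = (\<Sum>g\<in>F. lam C (c g * g))" using F(4) by (simp add: lam_sum)
  also have "\<dots> = 0"
    using F(2,3) by (intro sum.neutral ballI lam_mult_zero[OF _ _ _ C_def]) auto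
  finally have z: "lam C (T B - T R :: 'k tpoly) = 0" .
  have "mon B \<in> C" unfolding C_def by simp
  then have "lam C (T B - T R :: 'k tpoly) = 1 - (if mon R \<in> C then 1 else 0)"
    by (simp add: T_def lam_diff lam_single)
  with z have "mon R \<in> C" by (cases "mon R \<in> C") auto
  then show ?thesis unfolding C_def by simp
qed

end


context hgl
begin

lemma step_inv:
  assumes "stepM E d A A'"
  shows "set_mset A' \<subseteq> E" "\<And>j. vdeg A' j = vdeg A j" "size A' = size A"
proof -
  obtain w u v where s: "A = w + u" "A' = w + v" "set_mset (w + u + v) \<subseteq> E" "\<forall>j. vdeg u j = vdeg v j"
    using assms unfolding stepM_def by blast
  show "set_mset A' \<subseteq> E" using s by auto
  show "vdeg A' j = vdeg A j" for j using s by (simp add: vdeg_plus)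
  have "size u = size v" using bal_size[of u v] s by auto
  then show "size A' = size A" using s by simp
qed

lemma step_witness:
  assumes st: "stepM E d A A'" and AE: "set_mset A \<subseteq> E" and ne: "A \<noteq> {#}" and d1: "d \<ge> 1"
  shows "\<exists>w u v. A = w + u \<and> A' = w + v \<and> set_mset (w + u + v) \<subseteq> E \<and> (\<forall>j. vdeg u j = vdeg v j)
     \<and> size u \<le> d \<and> u \<noteq> {#} \<and> v \<noteq> {#}"
proof -
  obtain w u v where s: "A = w + u" "A' = w + v" "set_mset (w + u + v) \<subseteq> E" "\<forall>j. vdeg u j = vdeg v j" "size u \<le> d"
    using st unfolding stepM_def by blast
  show ?thesis
  proof (cases "u = {#}")
    case False
    then have "v \<noteq> {#}" using bal_empty[of u] s by (metis vdeg_empty le_sup_iff set_mset_union)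
    then show ?thesis using s False by blast
  next
    case True
    then have "v = {#}" using bal_empty[of v] s by (metis vdeg_empty le_sup_iff set_mset_union)
    then have AA: "A' = A" using s True by simp
    obtain e where e: "e \<in># A" using ne by blast
    have "A = (A - {#e#}) + {#e#}" using e by simp
    moreover have "set_mset ((A - {#e#}) + {#e#} + {#e#}) \<subseteq> E" using AE e by (auto dest: in_diffD)
    ultimately show ?thesis using AA d1
      by (intro exI[of _ "A - {#e#}"] exI[of _ "{#e#}"]) auto
  qed
qed

lemma small_step:
  assumes "set_mset u \<subseteq> E" "set_mset v \<subseteq> E" "\<And>j. vdeg u j = vdeg v j" "size u \<le> 1"
  shows "u = v"
proof (cases "u = {#}")
  case True
  then show ?thesis using bal_empty[of v] assms by (metis vdeg_empty)
next
  case False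
  then have "size u = 1" using assms(4) by (metis le_Suc_eq le_zero_eq size_eq_0_iff_empty One_nat_def)
  then obtain x where x: "u = {#x#}" by (metis size_1_singleton_mset)
  have "size v = 1" using bal_size[OF assms(1-3)] \<open>size u = 1\<close> by simp
  then obtain y where y: "v = {#y#}" by (metis size_1_singleton_mset)
  have "\<And>j. (j \<in> x) = (j \<in> y)" using assms(3) x y by (simp add: vdeg_add_mset split: if_splits) (metis one_neq_zero)
  then have "x = y" by blast
  then show ?thesis using x y by simp
qed

lemma blue_step:
  assumes bal: "balanced E (P, Q)" and P: "P = w + u" and sE: "set_mset (w + u + v) \<subseteq> E"
    and vuv: "\<And>j. vdeg u j = vdeg v j" and vne: "v \<noteq> {#}" and sz: "size u < size P"
  shows "blue_splitting_set_with E (P, Q) (u, v) v (w + v, Q)"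
proof -
  note b = bal_parts[OF bal]
  have vE: "set_mset v \<subseteq> E" using sE by auto
  have balF: "balanced E (P + v, Q + v)" using b vE unfolding balanced_def bsupp_def by (auto simp: vdeg_plus)
  have bal1: "balanced E (u, v)" using sE vuv unfolding balanced_def bsupp_def by auto
  have bal2: "balanced E (w + v, Q)" using sE b vuv P unfolding balanced_def bsupp_def
    by (auto simp: vdeg_plus)
  have ne1: "(u, v) \<noteq> (P + v, Q + v)" using sz by auto
  have ne2: "(w + v, Q) \<noteq> (P + v, Q + v)" using vne by auto
  have sep: "v = v \<inter># (w + v)" by (simp add: subset_mset.inf_absorb1)
  have sum: "P + v + (Q + v) = u + v + (w + v) + Q" using P by (simp add: ac_simps)
  have supp: "set_mset v \<subseteq> bsupp (P + v, Q + v)" by (auto simp: bsupp_def)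
  have red: "reducible_with E (add_both (P, Q) v) (u, v) v (w + v, Q)"
    unfolding reducible_with_def add_both_def
    using balF bal1 bal2 ne1 ne2 sep sum supp vne P by auto
  show ?thesis
    unfolding blue_splitting_set_with_def splitting_set_with_def blue_sep_def proper_sep_def
    using red vne vE by auto
qed

lemma red_step:
  assumes bal: "balanced E (P, Q)" and Q: "Q = w + v" and sE: "set_mset (w + u + v) \<subseteq> E"
    and vuv: "\<And>j. vdeg u j = vdeg v j" and une: "u \<noteq> {#}" and Pne: "P \<noteq> {#}"
  shows "red_splitting_set_with E (P, Q) (P, w + u) u (u, v)"
proof -
  note b = bal_parts[OF bal]
  have uE: "set_mset u \<subseteq> E" using sE by auto
  have balF: "balanced E (P + u, Q + u)" using b uE unfolding balanced_def bsupp_def by (auto simp: vdeg_plus)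
  have bal1: "balanced E (P, w + u)" using sE b vuv Q unfolding balanced_def bsupp_def
    by (auto simp: vdeg_plus)
  have bal2: "balanced E (u, v)" using sE vuv unfolding balanced_def bsupp_def by auto
  have ne1: "(P, w + u) \<noteq> (P + u, Q + u)" using une by auto
  have ne2: "(u, v) \<noteq> (P + u, Q + u)" using Pne by auto
  have sep: "u = (w + u) \<inter># u" by (simp add: subset_mset.inf_absorb2)
  have sum: "P + u + (Q + u) = P + (w + u) + u + v" using Q by (simp add: ac_simps)
  have supp: "set_mset u \<subseteq> bsupp (P + u, Q + u)" by (auto simp: bsupp_def)
  have red: "reducible_with E (add_both (P, Q) u) (P, w + u) u (u, v)"
    unfolding reducible_with_def add_both_def
    using balF bal1 bal2 ne1 ne2 sep sum supp une Q by auto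
  show ?thesis
    unfolding red_splitting_set_with_def splitting_set_with_def red_sep_def proper_sep_def
    using red une uE by auto
qed

end


context hgl
begin

lemma proper_MM:
  assumes ME: "set_mset M \<subseteq> E" and s3: "size M \<ge> 3" and PM: "P \<subseteq># M" and QM: "Q \<subseteq># M"
    and Pne: "P \<noteq> {#}" and Qne: "Q \<noteq> {#}" and PQ: "P \<inter># Q = {#}"
  shows "\<exists>T. proper_splitting_set E (M, M) T"
proof -
  obtain x where xP: "x \<in># P" using Pne by blast
  obtain y where yQ: "y \<in># Q" using Qne by blast
  have xy: "x \<noteq> y"
  proof
    assume "x = y"
    then have "x \<in># P \<inter># Q" using xP yQ by simp
    then show False using PQ by simp
  qed
  have xM: "x \<in># M" using xP PM by (auto dest: mset_subset_eqD)
  have yM: "y \<in># M" using yQ QM by (auto dest: mset_subset_eqD)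
  define R0 where "R0 = M - {#x#} - {#y#}"
  have yMx: "y \<in># M - {#x#}" using yM xy by (simp add: in_diff_count)
  have m1: "M - {#x#} - {#y#} + {#y#} = M - {#x#}" using yMx by (rule insert_DiffM2)
  have m2: "M - {#x#} + {#x#} = M" using xM by (rule insert_DiffM2)
  have MR0: "M = R0 + {#x#} + {#y#}" unfolding R0_def using m1 m2 by (metis add.assoc add.commute)
  have "size M = size R0 + 2" by (subst MR0) simp
  then have "size R0 \<ge> 1" using s3 by linarith
  then have "R0 \<noteq> {#}" by auto
  then obtain e where eR0: "e \<in># R0" by blast
  define M' where "M' = (R0 - {#e#}) + {#x#} + {#y#}"
  define S where "S = {#e#}"
  have MM': "M = M' + S" unfolding M'_def S_def using MR0 eR0 by (simp add: add_ac)
  define A where "A = filter_mset (\<lambda>t. t = x) M'"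
  define C where "C = filter_mset (\<lambda>t. t \<noteq> x) M'"
  have AC: "A + C = M'" unfolding A_def C_def by (rule multiset_partition[symmetric])
  have xA: "x \<in># A" unfolding A_def M'_def by simp
  have yC: "y \<in># C" unfolding C_def M'_def using xy by simp
  have yA: "y \<notin># A" unfolding A_def using xy by simp
  have xC: "x \<notin># C" unfolding C_def by simp
  have AM: "A \<subseteq># M" using AC MM' by (metis mset_subset_eq_add_left subset_mset.order_trans)
  have CM: "C \<subseteq># M" using AC MM' by (metis mset_subset_eq_add_right subset_mset.order_trans add.commute)
  have eE: "e \<in> E" using ME MM' S_def by auto
  have SE: "set_mset S \<subseteq> E" using eE S_def by simp
  have AE: "set_mset A \<subseteq> E" using ME AM by (meson mset_subset_eqD subset_iff)
  have CE: "set_mset C \<subseteq> E" using ME CM by (meson mset_subset_eqD subset_iff)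
  have balF: "balanced E (M + S, M + S)" using ME SE unfolding balanced_def bsupp_def by auto
  have bal1: "balanced E (A + S, A + S)" using AE SE unfolding balanced_def bsupp_def by auto
  have bal2: "balanced E (C + S, C + S)" using CE SE unfolding balanced_def bsupp_def by auto
  have ne1: "(A + S, A + S) \<noteq> (M + S, M + S)" using yA yM by auto
  have ne2: "(C + S, C + S) \<noteq> (M + S, M + S)" using xC xM by auto
  have sep: "S = (A + S) \<inter># (C + S)"
  proof (rule multiset_eqI)
    fix t
    have "count A t = 0 \<or> count C t = 0" unfolding A_def C_def by auto
    then show "count S t = count ((A + S) \<inter># (C + S)) t" by auto
  qed
  have sum: "M + S + (M + S) = (A + S) + (A + S) + (C + S) + (C + S)"
    unfolding MM' AC[symmetric] by (simp add: ac_simps)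
  have supp: "set_mset S \<subseteq> bsupp (M + S, M + S)" by (auto simp: bsupp_def)
  have Sne: "S \<noteq> {#}" unfolding S_def by simp
  have red: "reducible_with E (add_both (M, M) S) (A + S, A + S) S (C + S, C + S)"
    unfolding reducible_with_def add_both_def
    using balF bal1 bal2 ne1 ne2 sep sum supp Sne AM CM by auto
  have pr: "proper_sep (A + S, A + S) S (C + S, C + S)"
  proof -
    have "A \<noteq> {#}" "C \<noteq> {#}" using xA yC by auto
    then have "S \<subset># A + S" "S \<subset># C + S" by (simp_all add: subset_mset.less_le)
    then show ?thesis unfolding proper_sep_def by simp
  qed
  show ?thesis
    unfolding proper_splitting_set_def splitting_set_with_def
    using red pr Sne SE by blast
qed

lemma step_refl: "set_mset A \<subseteq> E \<Longrightarrow> stepM E d A A"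
  unfolding stepM_def by (intro exI[of _ A] exI[of _ "{#}"]) auto

end


context hgl
begin

lemma forward:
  assumes gen: "generated_in_degree_at_most E d TYPE('k::field)" and d0: "d > 0"
    and prim: "primitive E W" and bs: "bsize W = 2 * n" and nd: "n > d"
  shows "splitting_chain E W n"
proof -
  obtain B R where W: "W = (B, R)" by (cases W)
  have bal: "balanced E (B, R)" using prim W unfolding primitive_def by simp
  note bp = bal_parts[OF bal]
  have BE: "set_mset B \<subseteq> E" and RE: "set_mset R \<subseteq> E" and v: "\<And>j. vdeg B j = vdeg R j" using bp by auto
  have szBR: "size B = size R" using bal_size[OF BE RE v] .
  have szB: "size B = n" using bs W szBR by (simp add: bsize_def)
  have BR: "B \<noteq> R"
  proof
    assume BR: "B = R"
    have "B \<noteq> {#}" using szB nd by auto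
    then obtain x where x: "x \<in># B" by blast
    have xE: "x \<in> E" using x BE by auto
    have b1: "balanced E ({#x#}, {#x#})" using xE unfolding balanced_def bsupp_def by auto
    have "{#x#} \<subseteq># B" using x by simp
    moreover have xB: "{#x#} \<noteq> B"
    proof
      assume "{#x#} = B"
      then have "size B = 1" by auto
      then show False using szB nd d0 by simp
    qed
    ultimately have xsB: "{#x#} \<subset># B" by (simp add: subset_mset.less_le)
    have ne0: "({#x#}, {#x#}) \<noteq> ({#}, {#})" by simp
    have neW: "({#x#}, {#x#}) \<noteq> (B, R)" using xB by simp
    have "\<exists>E'. balanced E E' \<and> E' \<noteq> ({#}, {#}) \<and> E' \<noteq> (B, R) \<and> blue E' \<subset># B \<and> red E' \<subset># R"
    proof (rule exI[of _ "({#x#}, {#x#})"])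
      show "balanced E ({#x#}, {#x#}) \<and> ({#x#}, {#x#}) \<noteq> ({#}, {#}) \<and> ({#x#}, {#x#}) \<noteq> (B, R) \<and>
        blue ({#x#}, {#x#}) \<subset># B \<and> red ({#x#}, {#x#}) \<subset># R"
        using b1 ne0 neW xsB BR by (simp only: fst_conv snd_conv) simp
    qed
    moreover have "\<not> (\<exists>E'. balanced E E' \<and> E' \<noteq> ({#}, {#}) \<and> E' \<noteq> (B, R) \<and> blue E' \<subset># B \<and> red E' \<subset># R)"
      using prim W unfolding primitive_def by simp
    ultimately show False by blast
  qed
  have "(stepM E d)\<^sup>*\<^sup>* B R" by (rule path_exists[OF gen BE RE v])
  then obtain L where "(stepM E d ^^ L) B R" unfolding rtranclp_power by blast
  then obtain f where f0: "f 0 = B" and fL: "f L = R" and fs: "\<forall>i<L. stepM E d (f i) (f (Suc i))"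
    unfolding relpowp_fun_conv by blast
  define L2 where "L2 = (if even L then L else Suc L)"
  define g where "g i = (if i \<le> L then f i else R)" for i
  have g0: "g 0 = B" using f0 by (simp add: g_def)
  have gL: "g L2 = R" using fL by (auto simp: g_def L2_def)
  have ev: "even L2" by (simp add: L2_def)
  have inv0: "set_mset (f i) \<subseteq> E \<and> (\<forall>j. vdeg (f i) j = vdeg B j) \<and> size (f i) = n" if "i \<le> L" for i
    using that
  proof (induction i)
    case 0 then show ?case using f0 BE szB by simp
  next
    case (Suc i)
    then have st: "stepM E d (f i) (f (Suc i))" using fs by simp
    have "set_mset (f i) \<subseteq> E \<and> (\<forall>j. vdeg (f i) j = vdeg B j) \<and> size (f i) = n" using Suc by simp
    then show ?case using step_inv[OF st] by auto
  qed
  have ginv: "set_mset (g i) \<subseteq> E \<and> (\<forall>j. vdeg (g i) j = vdeg B j) \<and> size (g i) = n" for i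
    using inv0[of i] RE v szBR szB by (auto simp: g_def)
  have gs: "stepM E d (g i) (g (Suc i))" if "i < L2" for i
  proof (cases "i < L")
    case True then show ?thesis using fs by (simp add: g_def)
  next
    case False
    then have "g i = R" "g (Suc i) = R" using that fL by (auto simp: g_def L2_def split: if_splits)
    then show ?thesis using step_refl[OF RE] by simp
  qed
  have L2ne: "L2 \<noteq> 0"
  proof
    assume "L2 = 0"
    then have "g L2 = g 0" by simp
    then show False using g0 gL BR by simp
  qed
  have gne: "g i \<noteq> {#}" for i using ginv[of i] nd by auto
  have "\<forall>i. \<exists>t. i < L2 \<longrightarrow> (g i = fst t + fst (snd t) \<and> g (Suc i) = fst t + snd (snd t) \<and>
      set_mset (fst t + fst (snd t) + snd (snd t)) \<subseteq> E \<and> (\<forall>j. vdeg (fst (snd t)) j = vdeg (snd (snd t)) j)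
     \<and> size (fst (snd t)) \<le> d \<and> fst (snd t) \<noteq> {#} \<and> snd (snd t) \<noteq> {#})"
  proof
    fix i
    show "\<exists>t. i < L2 \<longrightarrow> (g i = fst t + fst (snd t) \<and> g (Suc i) = fst t + snd (snd t) \<and>
      set_mset (fst t + fst (snd t) + snd (snd t)) \<subseteq> E \<and> (\<forall>j. vdeg (fst (snd t)) j = vdeg (snd (snd t)) j)
     \<and> size (fst (snd t)) \<le> d \<and> fst (snd t) \<noteq> {#} \<and> snd (snd t) \<noteq> {#})"
    proof (cases "i < L2")
      case True
      obtain w u v where "g i = w + u \<and> g (Suc i) = w + v \<and> set_mset (w + u + v) \<subseteq> E \<and> (\<forall>j. vdeg u j = vdeg v j)
        \<and> size u \<le> d \<and> u \<noteq> {#} \<and> v \<noteq> {#}"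
        using step_witness[OF gs[OF True]] ginv[of i] gne[of i] d0 by auto
      then show ?thesis by (intro exI[of _ "(w, u, v)"]) simp
    qed simp
  qed
  then obtain t where t: "\<And>i. i < L2 \<Longrightarrow> (g i = fst (t i) + fst (snd (t i)) \<and> g (Suc i) = fst (t i) + snd (snd (t i)) \<and>
      set_mset (fst (t i) + fst (snd (t i)) + snd (snd (t i))) \<subseteq> E \<and> (\<forall>j. vdeg (fst (snd (t i))) j = vdeg (snd (snd (t i))) j)
     \<and> size (fst (snd (t i))) \<le> d \<and> fst (snd (t i)) \<noteq> {#} \<and> snd (snd (t i)) \<noteq> {#})"
    by metis
  define ww where "ww i = fst (t i)" for i
  define uu where "uu i = fst (snd (t i))" for i
  define vv where "vv i = snd (snd (t i))" for i
  have wt: "g i = ww i + uu i" "g (Suc i) = ww i + vv i" "set_mset (ww i + uu i + vv i) \<subseteq> E"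
    "\<And>j. vdeg (uu i) j = vdeg (vv i) j" "size (uu i) \<le> d" "uu i \<noteq> {#}" "vv i \<noteq> {#}" if "i < L2" for i
    using t[OF that] unfolding ww_def uu_def vv_def by auto
  have n3: "n \<ge> 3"
  proof (rule ccontr)
    assume "\<not> n \<ge> 3"
    then have d1: "d \<le> 1" using nd by simp
    have "g i = B" if "i \<le> L2" for i
      using that
    proof (induction i)
      case 0 then show ?case using g0 by simp
    next
      case (Suc i)
      then have i: "i < L2" by simp
      have "uu i = vv i" using small_step[of "uu i" "vv i"] wt[OF i] d1 by auto
      then show ?case using wt[OF i] Suc by simp
    qed
    then show False using gL BR by auto
  qed
  define K where "K = L2 div 2"
  have L2K: "L2 = 2 * K" using ev by (simp add: K_def)
  have K1: "K \<ge> 1" using L2ne L2K by simp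
  define S where "S i = vv (i - 1)" for i
  define G1 where "G1 i = (uu (i - 1), vv (i - 1))" for i
  define G2 where "G2 i = (ww (i - 1) + vv (i - 1), g (L2 - (i - 1)))" for i
  define Rr where "Rr i = uu (L2 - i)" for i
  define U1 where "U1 i = (g (i - 1), ww (L2 - i) + uu (L2 - i))" for i
  define U2 where "U2 i = (uu (L2 - i), vv (L2 - i))" for i
  have cw: "chain_walk W G2 U1 i = (g i, g (L2 - i))" if "i \<le> L2" for i
  proof (cases i)
    case 0 then show ?thesis using W g0 gL by (simp add: chain_walk_def)
  next
    case (Suc i')
    have "i' < L2" using that Suc by simp
    moreover have "L2 - i < L2" using Suc that by simp
    ultimately show ?thesis using wt Suc that
      by (simp add: chain_walk_def G2_def U1_def)
  qed
  have steps: "\<forall>i\<in>{1..K}.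
          blue_splitting_set_with E (chain_walk W G2 U1 (i - 1)) (G1 i) (S i) (G2 i) \<and>
          red_splitting_set_with E (chain_walk W G2 U1 (i - 1)) (U1 i) (Rr i) (U2 i) \<and>
          size (S i) < n \<and> size (Rr i) < n"
  proof
    fix i assume i: "i \<in> {1..K}"
    have i1: "i - 1 < L2" and i2: "L2 - i < L2" and i3: "Suc (L2 - i) = L2 - (i - 1)" and i4: "i - 1 \<le> L2"
      using i L2K by auto
    have X: "chain_walk W G2 U1 (i - 1) = (g (i - 1), g (L2 - (i - 1)))" using cw[OF i4] .
    have balX: "balanced E (g (i - 1), g (L2 - (i - 1)))"
      using ginv[of "i - 1"] ginv[of "L2 - (i - 1)"] unfolding balanced_def bsupp_def by auto
    note w1 = wt[OF i1] and w2 = wt[OF i2]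
    have szu: "size (uu (i - 1)) < size (g (i - 1))" using w1(5) nd ginv[of "i - 1"] by simp
    have b: "blue_splitting_set_with E (g (i - 1), g (L2 - (i - 1))) (uu (i - 1), vv (i - 1)) (vv (i - 1))
        (ww (i - 1) + vv (i - 1), g (L2 - (i - 1)))"
      by (rule blue_step[OF balX w1(1) w1(3) w1(4) w1(7) szu])
    have Qe: "g (L2 - (i - 1)) = ww (L2 - i) + vv (L2 - i)" using w2(2) i3 by simp
    have r: "red_splitting_set_with E (g (i - 1), g (L2 - (i - 1))) (g (i - 1), ww (L2 - i) + uu (L2 - i)) (uu (L2 - i))
        (uu (L2 - i), vv (L2 - i))"
      by (rule red_step[OF balX Qe w2(3) w2(4) w2(6) gne])
    have "size (vv (i - 1)) = size (uu (i - 1))" using bal_size[of "uu (i - 1)" "vv (i - 1)"] w1 by auto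
    then have s1: "size (S i) < n" using w1(5) nd by (simp add: S_def)
    have s2: "size (Rr i) < n" using w2(5) nd by (simp add: Rr_def)
    show "blue_splitting_set_with E (chain_walk W G2 U1 (i - 1)) (G1 i) (S i) (G2 i) \<and>
          red_splitting_set_with E (chain_walk W G2 U1 (i - 1)) (U1 i) (Rr i) (U2 i) \<and>
          size (S i) < n \<and> size (Rr i) < n"
      using b r s1 s2 X by (simp add: G1_def S_def G2_def U1_def Rr_def U2_def)
  qed
  have fin: "S K \<inter># Rr K \<noteq> {#} \<or> (\<exists>T. proper_splitting_set E (chain_walk W G2 U1 K) T)"
  proof (cases "S K \<inter># Rr K = {#}")
    case False then show ?thesis by simp
  next
    case True
    have KL: "K \<le> L2" "L2 - K = K" using L2K by auto
    have CK: "chain_walk W G2 U1 K = (g K, g K)" using cw[OF KL(1)] KL(2) by simp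
    have k1: "K - 1 < L2" and k2: "K < L2" and k3: "Suc (K - 1) = K" using K1 L2K by auto
    have P: "S K \<subseteq># g K" using wt(2)[OF k1] k3 by (simp add: S_def)
    have Q: "Rr K \<subseteq># g K" using wt(1)[OF k2] KL(2) by (simp add: Rr_def)
    have "\<exists>T. proper_splitting_set E (g K, g K) T"
      using proper_MM[OF _ _ P Q] ginv[of K] n3 wt(7)[OF k1] wt(6)[OF k2] True
      by (simp add: S_def Rr_def KL(2))
    then show ?thesis using CK by simp
  qed
  show ?thesis unfolding splitting_chain_def
    using K1 steps fin by blast
qed

end


theorem theorem5p1:
  fixes m k d :: nat and E :: "nat set set"
  assumes "hypergraph m E" and "uniform k E" and "d > 0"
  shows "generated_in_degree_at_most E d TYPE('k::field) \<longleftrightarrow>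
    (\<forall>W n. primitive E W \<and> bsupp W \<subseteq> E \<and> bsize W = 2 * n \<and> n > d \<longrightarrow>
       (\<exists>S. proper_splitting_set E W S) \<or> splitting_chain E W n)"
proof -
  interpret hgl m k E using assms(1,2) by unfold_locales
  show ?thesis
  proof
    assume gen: "generated_in_degree_at_most E d TYPE('k::field)"
    show "\<forall>W n. primitive E W \<and> bsupp W \<subseteq> E \<and> bsize W = 2 * n \<and> n > d \<longrightarrow>
       (\<exists>S. proper_splitting_set E W S) \<or> splitting_chain E W n"
    proof (intro allI impI)
      fix W n
      assume h: "primitive E W \<and> bsupp W \<subseteq> E \<and> bsize W = 2 * n \<and> n > d"
      have "splitting_chain E W n"
        using forward[OF gen assms(3)] h by blast
      then show "(\<exists>S. proper_splitting_set E W S) \<or> splitting_chain E W n" by blast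
    qed
  next
    assume rhs: "\<forall>W n. primitive E W \<and> bsupp W \<subseteq> E \<and> bsize W = 2 * n \<and> n > d \<longrightarrow>
       (\<exists>S. proper_splitting_set E W S) \<or> splitting_chain E W n"
    show "generated_in_degree_at_most E d TYPE('k::field)" by (rule backward[OF rhs])
  qed
qed

end
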